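(* There is an absolute constant $c>0$ such that the following holds. For every $\varepsilon>0$ there is $n_0=n_0(\varepsilon)$ such that for every $n\ge n_0$ and every $d$-regular $n$-vertex graph $F$ with $d\le(1-\varepsilon)n$, every 2-coloring $f:E(K_n)\to\{\pm1\}$ admits a copy of $F$ in $K_n$ with discrepancy at least $c\sqrt{\varepsilon d}\,n$.
   Context: For a coloring $f:E(K_n)\to\{\pm1\}$ and a subgraph $F_0\subseteq K_n$, the discrepancy of $F_0$ is $\left|\sum_{e\in E(F_0)}f(e)\right|$. A copy of $F$ in $K_n$ is a subgraph of $K_n$ isomorphic to $F$. *)

theory Defs
  imports Complex_Main
begin

definition Kn_edges :: "nat \<Rightarrow> nat set set" where
  "Kn_edges n = {e. e \<subseteq> {..<n} \<and> card e = 2}"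

definition graph_on :: "nat \<Rightarrow> nat set set \<Rightarrow> bool" where
  "graph_on n F \<longleftrightarrow> F \<subseteq> Kn_edges n"

definition degree :: "nat set set \<Rightarrow> nat \<Rightarrow> nat" where
  "degree F v = card {e \<in> F. v \<in> e}"

definition regular :: "nat \<Rightarrow> nat set set \<Rightarrow> nat \<Rightarrow> bool" where
  "regular n F d \<longleftrightarrow> (\<forall>v<n. degree F v = d)"

text \<open>Copies of an n-vertex graph F in K_n: subgraphs H of K_n isomorphic to F.
  Since F spans all n vertices, these are exactly the images of F under
  permutations of the vertex set.\<close>
definition is_copy :: "nat \<Rightarrow> nat set set \<Rightarrow> nat set set \<Rightarrow> bool" where
  "is_copy n F H \<longleftrightarrow> (\<exists>\<sigma>. bij_betw \<sigma> {..<n} {..<n} \<and> H = (\<lambda>e. \<sigma> ` e) ` F)"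

definition discrepancy :: "(nat set \<Rightarrow> int) \<Rightarrow> nat set set \<Rightarrow> int" where
  "discrepancy f H = \<bar>\<Sum>e\<in>H. f e\<bar>"

end

theory Submission
  imports Defs "HOL-Combinatorics.Permutations"
begin

definition dlists :: "nat \<Rightarrow> 'a set \<Rightarrow> 'a list set" where
  "dlists k U = {xs. length xs = k \<and> distinct xs \<and> set xs \<subseteq> U}"

lemma finite_dlists: "finite U \<Longrightarrow> finite (dlists k U)"
  unfolding dlists_def
  by (rule finite_subset[OF _ finite_lists_length_eq[of U k]]) auto

lemma exists_perm_map:
  assumes "finite U"
  shows "distinct xs \<Longrightarrow> distinct ys \<Longrightarrow> length xs = length ys \<Longrightarrow> set xs \<subseteq> U \<Longrightarrow> set ys \<subseteq> U
    \<Longrightarrow> \<exists>\<tau>. \<tau> permutes U \<and> map \<tau> xs = ys"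
proof (induction xs arbitrary: ys)
  case Nil
  show ?case
  proof (intro exI conjI)
    show "id permutes U" by (rule permutes_id)
    show "map id [] = ys" using Nil by simp
  qed
next
  case (Cons x xs)
  then obtain y ys' where ys: "ys = y # ys'" by (cases ys) auto
  from Cons.prems ys obtain \<tau>' where t': "\<tau>' permutes U" "map \<tau>' xs = ys'"
    using Cons.IH[of ys'] by auto
  define \<tau> where "\<tau> = transpose (\<tau>' x) y \<circ> \<tau>'"
  have xU: "x \<in> U" "y \<in> U" using Cons.prems ys by auto
  have "\<tau>' x \<in> U" using t'(1) xU by (simp add: permutes_in_image)
  then have p: "\<tau> permutes U" unfolding \<tau>_def
    by (intro permutes_compose t'(1) permutes_swap_id) (use xU in auto)
  have "map \<tau> xs = ys'"
  proof -
    have eqz: "\<tau> z = \<tau>' z" if "z \<in> set xs" for z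
    proof -
      have "\<tau>' z \<in> set ys'" using t'(2) that by auto
      then have "\<tau>' z \<noteq> y" using Cons.prems ys by auto
      moreover have "\<tau>' z \<noteq> \<tau>' x" using that Cons.prems permutes_inj[OF t'(1)]
        by (auto dest: injD)
      ultimately show ?thesis unfolding \<tau>_def by (simp add: transpose_def)
    qed
    have "map \<tau> xs = map \<tau>' xs" by (rule map_cong[OF refl eqz])
    then show ?thesis using t'(2) by simp
  qed
  moreover have "\<tau> x = y" unfolding \<tau>_def by simp
  ultimately show ?case using p ys by (intro exI[of _ \<tau>]) auto
qed

lemma card_perm_fix:
  assumes "finite U" "set xs \<subseteq> U" "distinct xs"
  shows "card {\<pi>. \<pi> permutes U \<and> map \<pi> xs = xs} = fact (card U - length xs)"
proof -
  have "{\<pi>. \<pi> permutes U \<and> map \<pi> xs = xs} = {\<pi>. \<pi> permutes (U - set xs)}"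
  proof (intro set_eqI iffI)
    fix \<pi> assume "\<pi> \<in> {\<pi>. \<pi> permutes U \<and> map \<pi> xs = xs}"
    then have a: "\<pi> permutes U" "map \<pi> xs = xs" by auto
    have "map \<pi> xs = map id xs" using a(2) by simp
    then have fx0: "\<forall>z\<in>set xs. \<pi> z = id z" by (simp only: map_eq_conv)
    have fx: "\<pi> z = z" if "z \<in> set xs" for z using fx0 that by simp
    have "\<forall>x. x \<notin> U - set xs \<longrightarrow> \<pi> x = x" using fx permutes_not_in[OF a(1)] by blast
    moreover have "\<forall>y. \<exists>!x. \<pi> x = y" using a(1) unfolding permutes_def by blast
    ultimately have "\<pi> permutes U - set xs" by (simp add: permutes_def)
    then show "\<pi> \<in> {\<pi>. \<pi> permutes (U - set xs)}" by simp
  next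
    fix \<pi> assume "\<pi> \<in> {\<pi>. \<pi> permutes (U - set xs)}"
    then have a: "\<pi> permutes U - set xs" by simp
    have 1: "\<pi> permutes U" by (rule permutes_subset[OF a]) auto
    have "\<pi> z = z" if "z \<in> set xs" for z using a that by (auto simp: permutes_not_in)
    then have "map \<pi> xs = xs" by (simp add: map_idI)
    with 1 show "\<pi> \<in> {\<pi>. \<pi> permutes U \<and> map \<pi> xs = xs}" by simp
  qed
  moreover have "card (U - set xs) = card U - length xs"
    using assms by (simp add: card_Diff_subset distinct_card)
  ultimately show ?thesis using card_permutations[of "U - set xs"] assms by simp
qed

lemma card_perm_map:
  assumes "finite U" "ys \<in> dlists (length xs) U" "set xs \<subseteq> U" "distinct xs"
  shows "card {\<beta>. \<beta> permutes U \<and> map \<beta> xs = ys} = fact (card U - length xs)"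
proof -
  obtain \<tau> where t: "\<tau> permutes U" "map \<tau> xs = ys"
    using exists_perm_map[OF assms(1) assms(4), of ys] assms by (auto simp: dlists_def)
  have eq: "{\<beta>. \<beta> permutes U \<and> map \<beta> xs = ys} = (\<lambda>\<pi>. \<tau> \<circ> \<pi>) ` {\<pi>. \<pi> permutes U \<and> map \<pi> xs = xs}"
  proof (intro set_eqI iffI)
    fix \<beta> assume "\<beta> \<in> {\<beta>. \<beta> permutes U \<and> map \<beta> xs = ys}"
    then have b: "\<beta> permutes U" "map \<beta> xs = ys" by auto
    have "inv \<tau> \<circ> \<beta> permutes U" by (intro permutes_compose b(1) permutes_inv t(1))
    moreover have "map (inv \<tau> \<circ> \<beta>) xs = xs"
    proof -
      have "map (inv \<tau> \<circ> \<beta>) xs = map (inv \<tau>) (map \<beta> xs)" by simp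
      also have "\<dots> = map (inv \<tau>) (map \<tau> xs)" using b(2) t(2) by simp
      also have "\<dots> = map (inv \<tau> \<circ> \<tau>) xs" by simp
      also have "\<dots> = xs" using permutes_inv_o(2)[OF t(1)] by simp
      finally show ?thesis .
    qed
    moreover have "\<beta> = \<tau> \<circ> (inv \<tau> \<circ> \<beta>)"
      using permutes_inverses(1)[OF t(1)] by (auto simp: fun_eq_iff)
    ultimately show "\<beta> \<in> (\<lambda>\<pi>. \<tau> \<circ> \<pi>) ` {\<pi>. \<pi> permutes U \<and> map \<pi> xs = xs}" by blast
  next
    fix \<beta> assume "\<beta> \<in> (\<lambda>\<pi>. \<tau> \<circ> \<pi>) ` {\<pi>. \<pi> permutes U \<and> map \<pi> xs = xs}"
    then obtain \<pi> where "\<pi> permutes U" "map \<pi> xs = xs" "\<beta> = \<tau> \<circ> \<pi>" by auto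
    then show "\<beta> \<in> {\<beta>. \<beta> permutes U \<and> map \<beta> xs = ys}"
      using t by (auto intro: permutes_compose simp: map_map[symmetric])
  qed
  have i: "inj_on (\<lambda>\<pi>. \<tau> \<circ> \<pi>) X" for X
    using permutes_inj[OF t(1)] by (auto simp: inj_on_def fun_eq_iff dest: injD)
  have "card {\<beta>. \<beta> permutes U \<and> map \<beta> xs = ys} = card ((\<lambda>\<pi>. \<tau> \<circ> \<pi>) ` {\<pi>. \<pi> permutes U \<and> map \<pi> xs = xs})"
    by (simp only: eq)
  also have "\<dots> = card {\<pi>. \<pi> permutes U \<and> map \<pi> xs = xs}" by (rule card_image[OF i])
  also have "\<dots> = fact (card U - length xs)" by (rule card_perm_fix[OF assms(1,3,4)])
  finally show ?thesis .
qed

lemma sum_perm_tuple: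
  fixes G :: "'a list \<Rightarrow> real"
  assumes "finite U" "set xs \<subseteq> U" "distinct xs"
  shows "(\<Sum>\<beta>\<in>{\<beta>. \<beta> permutes U}. G (map \<beta> xs))
       = fact (card U - length xs) * (\<Sum>ys\<in>dlists (length xs) U. G ys)"
proof -
  have fP: "finite {\<beta>. \<beta> permutes U}" using finite_permutations[OF assms(1)] .
  have img: "(\<lambda>\<beta>. map \<beta> xs) ` {\<beta>. \<beta> permutes U} \<subseteq> dlists (length xs) U"
  proof
    fix ys assume "ys \<in> (\<lambda>\<beta>. map \<beta> xs) ` {\<beta>. \<beta> permutes U}"
    then obtain \<beta> where b: "\<beta> permutes U" "ys = map \<beta> xs" by auto
    have "set ys \<subseteq> U" using b assms(2) by (auto simp: permutes_in_image)
    moreover have "distinct ys" using b assms(3) by (simp add: distinct_map permutes_inj_on)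
    ultimately show "ys \<in> dlists (length xs) U" using b by (simp add: dlists_def)
  qed
  have "(\<Sum>\<beta>\<in>{\<beta>. \<beta> permutes U}. G (map \<beta> xs))
      = (\<Sum>ys\<in>dlists (length xs) U. \<Sum>\<beta>\<in>{\<beta>\<in>{\<beta>. \<beta> permutes U}. map \<beta> xs = ys}. G (map \<beta> xs))"
    by (rule sum.group[symmetric, OF fP finite_dlists[OF assms(1)] img])
  also have "\<dots> = (\<Sum>ys\<in>dlists (length xs) U. fact (card U - length xs) * G ys)"
  proof (rule sum.cong[OF refl])
    fix ys assume ys: "ys \<in> dlists (length xs) U"
    have "(\<Sum>\<beta>\<in>{\<beta>\<in>{\<beta>. \<beta> permutes U}. map \<beta> xs = ys}. G (map \<beta> xs))
        = (\<Sum>\<beta>\<in>{\<beta>. \<beta> permutes U \<and> map \<beta> xs = ys}. G ys)"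
      by (rule sum.cong) auto
    also have "\<dots> = fact (card U - length xs) * G ys"
      using card_perm_map[OF assms(1) ys assms(2,3)] by simp
    finally show "(\<Sum>\<beta>\<in>{\<beta>\<in>{\<beta>. \<beta> permutes U}. map \<beta> xs = ys}. G (map \<beta> xs)) = fact (card U - length xs) * G ys" .
  qed
  finally show ?thesis by (simp add: sum_distrib_left)
qed

lemma dlists_Suc:
  "dlists (Suc k) U = (\<lambda>(a, ys). a # ys) ` (SIGMA a:U. dlists k (U - {a}))"
  unfolding dlists_def by (auto simp: length_Suc_conv image_iff)

lemma sum_dlists_Suc:
  fixes G :: "'a list \<Rightarrow> real"
  assumes "finite U"
  shows "(\<Sum>ys\<in>dlists (Suc k) U. G ys) = (\<Sum>a\<in>U. \<Sum>ys\<in>dlists k (U - {a}). G (a # ys))"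
proof -
  have inj: "inj_on (\<lambda>(a, ys). a # ys) (SIGMA a:U. dlists k (U - {a}))"
    by (auto simp: inj_on_def)
  have "(\<Sum>ys\<in>dlists (Suc k) U. G ys) = (\<Sum>p\<in>(SIGMA a:U. dlists k (U - {a})). G (fst p # snd p))"
    unfolding dlists_Suc sum.reindex[OF inj] by (simp add: case_prod_beta)
  also have "\<dots> = (\<Sum>(a,ys)\<in>(SIGMA a:U. dlists k (U - {a})). G (a # ys))"
    by (simp add: case_prod_beta)
  also have "\<dots> = (\<Sum>a\<in>U. \<Sum>ys\<in>dlists k (U - {a}). G (a # ys))"
    by (rule sum.Sigma[symmetric]) (use assms in \<open>auto simp: finite_dlists\<close>)
  finally show ?thesis .
qed

lemma dlists_0: "dlists 0 U = {[]}" by (auto simp: dlists_def)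

lemma sum_dlists_4:
  fixes G :: "'a list \<Rightarrow> real"
  assumes "finite U"
  shows "(\<Sum>ys\<in>dlists 4 U. G ys) = (\<Sum>a\<in>U. \<Sum>b\<in>U-{a}. \<Sum>c\<in>U-{a}-{b}. \<Sum>e\<in>U-{a}-{b}-{c}. G [a,b,c,e])"
  using assms by (simp add: numeral_eq_Suc sum_dlists_Suc dlists_0)

lemma sum_dlists_2:
  fixes G :: "'a list \<Rightarrow> real"
  assumes "finite U"
  shows "(\<Sum>ys\<in>dlists 2 U. G ys) = (\<Sum>a\<in>U. \<Sum>b\<in>U-{a}. G [a,b])"
  using assms by (simp add: numeral_eq_Suc sum_dlists_Suc dlists_0)

lemma card2_elems:
  assumes "card e = 2"
  obtains a b where "e = {a, b}" "a \<noteq> b"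
  using assms by (auto simp: card_2_iff)

lemma finite_graph: "graph_on n F \<Longrightarrow> finite F"
  unfolding graph_on_def Kn_edges_def
  by (rule finite_subset[of _ "Pow {..<n}"]) auto

lemma sum_F_ordered:
  fixes h :: "nat set \<Rightarrow> real"
  assumes G: "graph_on n F"
  shows "2 * (\<Sum>e\<in>F. h e) = (\<Sum>u<n. \<Sum>v<n. if {u,v} \<in> F then h {u,v} else 0)"
proof -
  define P where "P = {p \<in> {..<n} \<times> {..<n}. {fst p, snd p} \<in> F}"
  have finP: "finite P" unfolding P_def by (rule finite_subset[of _ "{..<n} \<times> {..<n}"]) auto
  have finF: "finite F" using G by (rule finite_graph)
  have "(\<Sum>u<n. \<Sum>v<n. if {u,v} \<in> F then h {u,v} else 0)
      = (\<Sum>p\<in>{..<n} \<times> {..<n}. if {fst p, snd p} \<in> F then h {fst p, snd p} else 0)"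
    by (simp add: sum.cartesian_product case_prod_beta)
  also have "\<dots> = (\<Sum>p\<in>P. h {fst p, snd p})"
    unfolding P_def by (rule sum.inter_filter[symmetric]) auto
  also have "\<dots> = (\<Sum>e\<in>F. \<Sum>p\<in>{p\<in>P. {fst p, snd p} = e}. h {fst p, snd p})"
    by (rule sum.group[symmetric, OF finP finF]) (auto simp: P_def)
  also have "\<dots> = (\<Sum>e\<in>F. 2 * h e)"
  proof (rule sum.cong[OF refl])
    fix e assume e: "e \<in> F"
    then have eK: "e \<subseteq> {..<n}" "card e = 2" using G by (auto simp: graph_on_def Kn_edges_def)
    then obtain a b where ab: "e = {a,b}" "a \<noteq> b" by (auto elim: card2_elems)
    have abn: "a < n" "b < n" using eK ab by auto
    have ba: "{b,a} = e" using ab by (simp add: insert_commute)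
    have "{p\<in>P. {fst p, snd p} = e} = {(a,b), (b,a)}"
    proof (intro set_eqI iffI)
      fix p assume "p \<in> {p\<in>P. {fst p, snd p} = e}"
      then have "{fst p, snd p} = {a,b}" using ab by simp
      then have "(fst p = a \<and> snd p = b) \<or> (fst p = b \<and> snd p = a)" by (simp add: doubleton_eq_iff)
      then show "p \<in> {(a,b),(b,a)}" by (cases p) simp
    next
      fix p assume p: "p \<in> {(a,b),(b,a)}"
      have 1: "(a,b) \<in> P" using abn e ab by (simp add: P_def)
      have 2: "(b,a) \<in> P" using abn e ba by (simp add: P_def)
      from p have "p = (a,b) \<or> p = (b,a)" by simp
      then show "p \<in> {p\<in>P. {fst p, snd p} = e}"
      proof
        assume "p = (a,b)" then show ?thesis using 1 ab by simp
      next
        assume "p = (b,a)" then show ?thesis using 2 ba by simp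
      qed
    qed
    then show "(\<Sum>p\<in>{p\<in>P. {fst p, snd p} = e}. h {fst p, snd p}) = 2 * h e"
      using ab by (simp add: insert_commute)
  qed
  finally show ?thesis by (simp add: sum_distrib_left)
qed

lemma degree_sum:
  assumes G: "graph_on n F" and v: "v < n"
  shows "(\<Sum>u<n. if {v,u} \<in> F then (1::real) else 0) = real (degree F v)"
proof -
  have "(\<Sum>u<n. if {v,u} \<in> F then (1::real) else 0) = real (card {u\<in>{..<n}. {v,u} \<in> F})"
  proof -
    have "{..<n} \<inter> {u. {v, u} \<in> F} = {u\<in>{..<n}. {v,u} \<in> F}" by auto
    then show ?thesis by (simp add: sum.If_cases)
  qed
  also have "card {u\<in>{..<n}. {v,u} \<in> F} = card {e\<in>F. v \<in> e}"
  proof (rule bij_betw_same_card[of "\<lambda>u. {v,u}"])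
    show "bij_betw (\<lambda>u. {v,u}) {u\<in>{..<n}. {v,u} \<in> F} {e\<in>F. v \<in> e}"
    proof (rule bij_betwI'[where f="\<lambda>u. {v,u}"])
      fix x y assume "x \<in> {u\<in>{..<n}. {v,u} \<in> F}" "y \<in> {u\<in>{..<n}. {v,u} \<in> F}"
      then show "({v, x} = {v, y}) = (x = y)" by (auto simp: doubleton_eq_iff)
    next
      fix x assume "x \<in> {u\<in>{..<n}. {v,u} \<in> F}"
      then show "{v, x} \<in> {e \<in> F. v \<in> e}" by auto
    next
      fix e assume "e \<in> {e \<in> F. v \<in> e}"
      then have e: "e \<in> F" "v \<in> e" by auto
      then have eK: "e \<subseteq> {..<n}" "card e = 2" using G by (auto simp: graph_on_def Kn_edges_def)
      then obtain a b where ab: "e = {a,b}" "a \<noteq> b" by (auto elim: card2_elems)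
      show "\<exists>x\<in>{u \<in> {..<n}. {v, u} \<in> F}. e = {v, x}"
      proof (cases "v = a")
        case True then show ?thesis using ab e eK by (intro bexI[of _ b]) auto
      next
        case False then have "v = b" using ab e by auto
        then show ?thesis using ab e eK by (intro bexI[of _ a]) (auto simp: insert_commute)
      qed
    qed
  qed
  finally show ?thesis by (simp add: degree_def)
qed

lemma regular_sum:
  assumes "graph_on n F" "regular n F d" "v < n"
  shows "(\<Sum>u<n. if {v,u} \<in> F then (1::real) else 0) = real d"
  using degree_sum[OF assms(1,3)] assms(2,3) by (simp add: regular_def)

lemma handshake:
  assumes "graph_on n F" "regular n F d"
  shows "2 * real (card F) = real n * real d"
proof -
  have "2 * (\<Sum>e\<in>F. (1::real)) = (\<Sum>u<n. \<Sum>v<n. if {u,v} \<in> F then 1 else 0)"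
    using sum_F_ordered[OF assms(1), of "\<lambda>_. 1"] by simp
  also have "\<dots> = (\<Sum>u<n. real d)" using regular_sum[OF assms] by simp
  finally show ?thesis by simp
qed

lemma copy_sum:
  fixes h :: "nat set \<Rightarrow> real"
  assumes "\<sigma> permutes {..<n}"
  shows "is_copy n F ((\<lambda>e. \<sigma> ` e) ` F)"
    and "(\<Sum>e\<in>(\<lambda>e. \<sigma> ` e) ` F. h e) = (\<Sum>e\<in>F. h (\<sigma> ` e))"
proof -
  show "is_copy n F ((\<lambda>e. \<sigma> ` e) ` F)"
    unfolding is_copy_def using permutes_imp_bij[OF assms] by blast
  have "inj_on (\<lambda>e. \<sigma> ` e) F"
    using permutes_inj[OF assms] by (auto simp: inj_on_def inj_image_eq_iff)
  then show "(\<Sum>e\<in>(\<lambda>e. \<sigma> ` e) ` F. h e) = (\<Sum>e\<in>F. h (\<sigma> ` e))"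
    by (simp add: sum.reindex)
qed

lemma exists_abs_ge_avg:
  fixes x :: "'a \<Rightarrow> real"
  assumes "finite A" "A \<noteq> {}"
  shows "\<exists>a\<in>A. \<bar>x a\<bar> * real (card A) \<ge> \<bar>\<Sum>b\<in>A. x b\<bar>"
proof (rule ccontr)
  assume "\<not> ?thesis"
  then have lt: "\<bar>x a\<bar> * real (card A) < \<bar>\<Sum>b\<in>A. x b\<bar>" if "a \<in> A" for a using that by auto
  have "\<bar>\<Sum>b\<in>A. x b\<bar> * real (card A) \<le> (\<Sum>b\<in>A. \<bar>x b\<bar>) * real (card A)"
    by (intro mult_right_mono sum_abs) auto
  also have "\<dots> = (\<Sum>b\<in>A. \<bar>x b\<bar> * real (card A))" by (simp add: sum_distrib_right)
  also have "\<dots> < (\<Sum>b\<in>A. \<bar>\<Sum>b\<in>A. x b\<bar>)"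
    by (rule sum_strict_mono[OF assms]) (use lt in auto)
  also have "\<dots> = \<bar>\<Sum>b\<in>A. x b\<bar> * real (card A)" by simp
  finally show False by simp
qed

lemma exists_ge_avg:
  fixes x :: "'a \<Rightarrow> real"
  assumes "finite A" "A \<noteq> {}"
  shows "\<exists>a\<in>A. x a * real (card A) \<ge> (\<Sum>b\<in>A. x b)"
proof (rule ccontr)
  assume "\<not> ?thesis"
  then have lt: "x a * real (card A) < (\<Sum>b\<in>A. x b)" if "a \<in> A" for a using that by auto
  have "(\<Sum>b\<in>A. x b) * real (card A) = (\<Sum>b\<in>A. x b * real (card A))" by (simp add: sum_distrib_right)
  also have "\<dots> < (\<Sum>b\<in>A. (\<Sum>b\<in>A. x b))"
    by (rule sum_strict_mono[OF assms]) (use lt in auto)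
  also have "\<dots> = (\<Sum>b\<in>A. x b) * real (card A)" by simp
  finally show False by simp
qed

definition Ssum :: "nat \<Rightarrow> (nat set \<Rightarrow> int) \<Rightarrow> real" where
  "Ssum n f = (\<Sum>e\<in>Kn_edges n. real_of_int (f e))"

lemma Kn_graph: "graph_on n (Kn_edges n)" by (simp add: graph_on_def)

lemma Kn_mem: "{a,b} \<in> Kn_edges n \<longleftrightarrow> a < n \<and> b < n \<and> a \<noteq> b"
  by (auto simp: Kn_edges_def card_insert_if)

lemma sum_pairs_Kn:
  fixes h :: "nat set \<Rightarrow> real"
  shows "(\<Sum>a\<in>{..<n}. \<Sum>b\<in>{..<n}-{a}. h {a,b}) = 2 * (\<Sum>e\<in>Kn_edges n. h e)"
proof -
  have "(\<Sum>a\<in>{..<n}. \<Sum>b\<in>{..<n}-{a}. h {a,b}) = (\<Sum>a<n. \<Sum>b<n. if {a,b} \<in> Kn_edges n then h {a,b} else 0)"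
  proof (rule sum.cong[OF refl])
    fix a assume a: "a \<in> {..<n}"
    have "(\<Sum>b<n. if {a,b} \<in> Kn_edges n then h {a,b} else 0) = (\<Sum>b\<in>{..<n} \<inter> {b. a \<noteq> b}. h {a,b})"
      using a by (simp add: sum.If_cases Kn_mem)
    also have "{..<n} \<inter> {b. a \<noteq> b} = {..<n} - {a}" by auto
    finally show "(\<Sum>b\<in>{..<n}-{a}. h {a,b}) = (\<Sum>b<n. if {a,b} \<in> Kn_edges n then h {a,b} else 0)" by simp
  qed
  also have "\<dots> = 2 * (\<Sum>e\<in>Kn_edges n. h e)" using sum_F_ordered[OF Kn_graph, of h] by simp
  finally show ?thesis .
qed

lemma fact_reduce2: "2 \<le> n \<Longrightarrow> (fact n :: real) = real n * real (n - 1) * fact (n - 2)"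
proof -
  assume "2 \<le> n"
  then obtain m where "n = Suc (Suc m)" by (metis add_2_eq_Suc le_Suc_ex)
  then show ?thesis by (simp add: algebra_simps)
qed

lemma perm_pair_sum:
  fixes h :: "nat set \<Rightarrow> real"
  assumes "u < n" "v < n" "u \<noteq> v"
  shows "(\<Sum>\<sigma>\<in>{\<sigma>. \<sigma> permutes {..<n}}. h {\<sigma> u, \<sigma> v}) = fact (n - 2) * (2 * (\<Sum>e\<in>Kn_edges n. h e))"
proof -
  have "(\<Sum>\<sigma>\<in>{\<sigma>. \<sigma> permutes {..<n}}. h {\<sigma> u, \<sigma> v})
      = (\<Sum>\<sigma>\<in>{\<sigma>. \<sigma> permutes {..<n}}. (\<lambda>ys. h {ys!0, ys!1}) (map \<sigma> [u,v]))" by simp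
  also have "\<dots> = fact (card {..<n} - length [u,v]) * (\<Sum>ys\<in>dlists (length [u,v]) {..<n}. h {ys!0, ys!1})"
    by (rule sum_perm_tuple) (use assms in auto)
  also have "\<dots> = fact (n - 2) * (\<Sum>ys\<in>dlists 2 {..<n}. h {ys!0, ys!1})" by (simp add: numeral_2_eq_2)
  also have "\<dots> = fact (n - 2) * (\<Sum>a\<in>{..<n}. \<Sum>b\<in>{..<n}-{a}. h {a,b})"
    by (simp add: sum_dlists_2)
  finally show ?thesis by (simp add: sum_pairs_Kn)
qed

lemma avg_case:
  fixes f :: "nat set \<Rightarrow> int"
  assumes G: "graph_on n F" and R: "regular n F d" and n2: "2 \<le> n"
  shows "\<exists>\<sigma>. \<sigma> permutes {..<n} \<and>
           \<bar>\<Sum>e\<in>F. real_of_int (f (\<sigma> ` e))\<bar> * real (n - 1) \<ge> real d * \<bar>Ssum n f\<bar>"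
proof -
  let ?P = "{\<sigma>. \<sigma> permutes {..<n}}"
  let ?X = "\<lambda>\<sigma>. \<Sum>e\<in>F. real_of_int (f (\<sigma> ` e))"
  let ?A = "\<lambda>u v. if {u,v} \<in> F then (1::real) else 0"
  have fin: "finite ?P" by (rule finite_permutations) simp
  have ne: "?P \<noteq> {}" using permutes_id[of "{..<n}"] by blast
  have cardP: "real (card ?P) = fact n" using card_permutations[of "{..<n}" n] by simp
  have X2: "2 * ?X \<sigma> = (\<Sum>u<n. \<Sum>v<n. ?A u v * real_of_int (f {\<sigma> u, \<sigma> v}))" for \<sigma>
  proof -
    have "2 * ?X \<sigma> = (\<Sum>u<n. \<Sum>v<n. if {u,v} \<in> F then real_of_int (f {\<sigma> u, \<sigma> v}) else 0)"
      using sum_F_ordered[OF G, of "\<lambda>e. real_of_int (f (\<sigma> ` e))"] by (simp only: image_insert image_empty)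
    also have "\<dots> = (\<Sum>u<n. \<Sum>v<n. ?A u v * real_of_int (f {\<sigma> u, \<sigma> v}))"
      by (intro sum.cong refl) simp
    finally show ?thesis .
  qed
  have uv: "?A u v \<noteq> 0 \<Longrightarrow> u \<noteq> v" for u v
  proof -
    assume "?A u v \<noteq> 0"
    then have "{u,v} \<in> F" by (simp split: if_splits)
    then have "card {u,v} = 2" using G by (auto simp: graph_on_def Kn_edges_def)
    then show "u \<noteq> v" by auto
  qed
  have "(\<Sum>\<sigma>\<in>?P. 2 * ?X \<sigma>) = (\<Sum>u<n. \<Sum>v<n. \<Sum>\<sigma>\<in>?P. ?A u v * real_of_int (f {\<sigma> u, \<sigma> v}))"
    by (simp only: X2 sum.swap[of _ ?P])
  also have "\<dots> = (\<Sum>u<n. \<Sum>v<n. ?A u v * (fact (n - 2) * (2 * Ssum n f)))"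
  proof (intro sum.cong refl)
    fix u v assume "u \<in> {..<n}" "v \<in> {..<n}"
    then show "(\<Sum>\<sigma>\<in>?P. ?A u v * real_of_int (f {\<sigma> u, \<sigma> v})) = ?A u v * (fact (n - 2) * (2 * Ssum n f))"
      using perm_pair_sum[of u n v "\<lambda>e. real_of_int (f e)"] uv[of u v]
      by (cases "?A u v = 0") (auto simp: sum_distrib_left[symmetric] Ssum_def)
  qed
  also have "\<dots> = (\<Sum>u<n. \<Sum>v<n. ?A u v) * (fact (n - 2) * (2 * Ssum n f))"
    by (simp add: sum_distrib_right)
  also have "(\<Sum>u<n. \<Sum>v<n. ?A u v) = real n * real d"
    using sum_F_ordered[OF G, of "\<lambda>_. 1"] handshake[OF G R] by (simp add: if_distrib cong: if_cong)
  finally have tot: "(\<Sum>\<sigma>\<in>?P. ?X \<sigma>) = real n * real d * fact (n - 2) * Ssum n f"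
    by (simp add: sum_distrib_left[symmetric])
  obtain \<sigma> where s: "\<sigma> \<in> ?P" "\<bar>?X \<sigma>\<bar> * real (card ?P) \<ge> \<bar>\<Sum>\<sigma>\<in>?P. ?X \<sigma>\<bar>"
    using exists_abs_ge_avg[OF fin ne, of ?X] by blast
  have "\<bar>?X \<sigma>\<bar> * (real n * real (n - 1) * fact (n - 2)) \<ge> real n * real d * fact (n - 2) * \<bar>Ssum n f\<bar>"
    using s(2) unfolding cardP tot fact_reduce2[OF n2] by (simp add: abs_mult)
  then have "(\<bar>?X \<sigma>\<bar> * real (n - 1)) * (real n * fact (n - 2)) \<ge> (real d * \<bar>Ssum n f\<bar>) * (real n * fact (n - 2))"
    by (simp add: algebra_simps)
  moreover have "real n * fact (n - 2) > 0" using n2 by simp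
  ultimately have "\<bar>?X \<sigma>\<bar> * real (n - 1) \<ge> real d * \<bar>Ssum n f\<bar>"
    by (rule mult_right_le_imp_le)
  then show ?thesis using s(1) by blast
qed

definition partner :: "nat \<Rightarrow> nat" where
  "partner v = (if even v then Suc v else v - 1)"

lemma partner_partner[simp]: "partner (partner v) = v"
  by (auto simp: partner_def)

lemma partner_neq[simp]: "partner v \<noteq> v"
  unfolding partner_def by (cases "even v") (auto elim: oddE)

lemma partner_div2[simp]: "partner v div 2 = v div 2"
  by (auto simp: partner_def elim!: oddE)

lemma partner_lt: "v < 2 * k \<Longrightarrow> partner v < 2 * k"
  by (auto simp: partner_def elim!: oddE)

lemma partner_ge: "2 * k \<le> v \<Longrightarrow> 2 * k \<le> partner v"
  by (auto simp: partner_def elim!: oddE)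

lemma partner_eq_div: "z div 2 = a div 2 \<Longrightarrow> z = a \<or> z = partner a"
  by (auto simp: partner_def elim!: oddE evenE)

lemma partner_couple:
  "2 * k \<le> v \<Longrightarrow> (partner v - 2 * k) div 2 = (v - 2 * k) div 2"
  by (auto simp: partner_def elim!: oddE) presburger+

lemma partner_sym: "partner a = z \<longleftrightarrow> a = partner z"
  by auto

definition sw :: "nat \<Rightarrow> nat set \<Rightarrow> nat \<Rightarrow> nat" where
  "sw k S v = (if v < 2 * k \<and> v div 2 \<in> S then partner v else v)"

definition sgnS :: "nat set \<Rightarrow> nat \<Rightarrow> real" where
  "sgnS S i = (if i \<in> S then -1 else 1)"

definition psi :: "nat \<Rightarrow> (nat \<Rightarrow> nat \<Rightarrow> real) \<Rightarrow> nat \<Rightarrow> nat \<Rightarrow> real" where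
  "psi k g a z = (if z < 2 * k
      then (g a z + g a (partner z) - g (partner a) z - g (partner a) (partner z)) / 2
      else g a z - g (partner a) z)"

definition kap :: "nat \<Rightarrow> nat set \<Rightarrow> (nat \<Rightarrow> nat \<Rightarrow> real) \<Rightarrow> nat \<Rightarrow> nat \<Rightarrow> real" where
  "kap k S g a z = (if a < 2 * k \<and> z \<noteq> a \<and> z \<noteq> partner a then sgnS S (a div 2) * psi k g a z else 0)"

definition XX :: "nat \<Rightarrow> nat \<Rightarrow> (nat \<Rightarrow> nat \<Rightarrow> real) \<Rightarrow> (nat \<Rightarrow> nat \<Rightarrow> real) \<Rightarrow> nat set \<Rightarrow> real" where
  "XX n k g A S = (\<Sum>a<n. \<Sum>z<n. A a z * g (sw k S a) (sw k S z))"

definition C1 :: "nat \<Rightarrow> nat \<Rightarrow> (nat \<Rightarrow> nat \<Rightarrow> real) \<Rightarrow> (nat \<Rightarrow> nat \<Rightarrow> real) \<Rightarrow> nat \<Rightarrow> real" where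
  "C1 n k g A a = (\<Sum>z<n. if z = a \<or> z = partner a then 0 else A a z * psi k g a z)"

definition Cc :: "nat \<Rightarrow> nat \<Rightarrow> (nat \<Rightarrow> nat \<Rightarrow> real) \<Rightarrow> (nat \<Rightarrow> nat \<Rightarrow> real) \<Rightarrow> nat \<Rightarrow> real" where
  "Cc n k g A i = C1 n k g A (2 * i) + C1 n k g A (2 * i + 1)"

lemma sw_inv[simp]: "sw k S (sw k S v) = v"
  by (auto simp: sw_def partner_lt)

lemma sw_permutes: "2 * k \<le> n \<Longrightarrow> sw k S permutes {..<n}"
proof -
  assume kn: "2 * k \<le> n"
  have "sw k S permutes {..<2*k}"
  proof (rule inj_imp_permutes)
    show "inj_on (sw k S) {..<2 * k}" by (rule inj_onI) (drule arg_cong[where f="sw k S"], simp)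
    show "\<And>x. x \<in> {..<2 * k} \<Longrightarrow> sw k S x \<in> {..<2 * k}"
      using partner_lt[of _ k] by (auto simp: sw_def)
    show "\<And>i. i \<notin> {..<2 * k} \<Longrightarrow> sw k S i = i" by (auto simp: sw_def)
  qed simp
  then show ?thesis by (rule permutes_subset) (use kn in auto)
qed

lemma pointwise_odd:
  fixes g :: "nat \<Rightarrow> nat \<Rightarrow> real" and k :: nat and S :: "nat set"
  assumes gs: "\<And>x y. g x y = g y x" and az: "a \<noteq> z"
  defines "S' \<equiv> {..<k} - S"
  shows "g (sw k S a) (sw k S z) - g (sw k S' a) (sw k S' z) = kap k S g a z + kap k S g z a"
proof -
  have d1: "a < 2 * k \<Longrightarrow> a div 2 < k" by auto
  have d2: "z < 2 * k \<Longrightarrow> z div 2 < k" by auto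
  show ?thesis
  proof (cases "a < 2 * k")
    case a: True
    show ?thesis
    proof (cases "z < 2 * k")
      case z: True
      show ?thesis
      proof (cases "z = partner a")
        case True
        have e: "g (partner a) a = g a (partner a)" using gs by auto
        show ?thesis using True a z d1 unfolding kap_def sw_def S'_def
          by (cases "a div 2 \<in> S") (auto simp: e)
      next
        case zp: False
        then have zd: "z div 2 \<noteq> a div 2" using partner_eq_div az by blast
        have ap: "a \<noteq> partner z" using zp by auto
        have e: "g z a = g a z" "g (partner z) a = g a (partner z)" "g z (partner a) = g (partner a) z"
          "g (partner z) (partner a) = g (partner a) (partner z)" using gs by auto
        have pl: "partner a < 2 * k" "partner z < 2 * k" using a z partner_lt by auto
        have ne: "z \<noteq> partner a" "a \<noteq> partner z" using zp ap by auto
        show ?thesis using a z d1 d2 zd ne az pl unfolding kap_def sw_def S'_def psi_def sgnS_def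
          by (cases "a div 2 \<in> S"; cases "z div 2 \<in> S"; simp add: e field_simps)
      qed
    next
      case z: False
      show ?thesis using a z d1 az partner_lt[of a k] unfolding kap_def sw_def S'_def psi_def sgnS_def
        by (cases "a div 2 \<in> S") auto
    qed
  next
    case a: False
    show ?thesis
    proof (cases "z < 2 * k")
      case z: True
      have e: "g z a = g a z" "g (partner z) a = g a (partner z)" using gs by auto
      show ?thesis using a z d2 az partner_lt[of z k] unfolding kap_def sw_def S'_def psi_def sgnS_def
        by (cases "z div 2 \<in> S") (auto simp: e)
    next
      case z: False
      show ?thesis using a z unfolding kap_def sw_def by auto
    qed
  qed
qed

lemma sum_pairs_split:
  fixes h :: "nat \<Rightarrow> real"
  shows "(\<Sum>a<2*k. h a) = (\<Sum>i<k. h (2*i) + h (2*i+1))"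
proof (induction k)
  case 0 then show ?case by simp
next
  case (Suc k)
  have "{..<2 * Suc k} = insert (2*k+1) (insert (2*k) {..<2*k})" by auto
  then have "(\<Sum>a<2 * Suc k. h a) = h (2*k+1) + (h (2*k) + (\<Sum>a<2*k. h a))" by simp
  then show ?case using Suc by simp
qed

lemma odd_sum:
  fixes g A :: "nat \<Rightarrow> nat \<Rightarrow> real"
  assumes gs: "\<And>x y. g x y = g y x" and As: "\<And>x y. A x y = A y x" and A0: "\<And>x. A x x = 0"
    and kn: "2 * k \<le> n"
  shows "XX n k g A S - XX n k g A ({..<k} - S) = 2 * (\<Sum>i<k. sgnS S i * Cc n k g A i)"
proof -
  let ?S' = "{..<k} - S"
  have "XX n k g A S - XX n k g A ?S'
      = (\<Sum>a<n. \<Sum>z<n. A a z * (g (sw k S a) (sw k S z) - g (sw k ?S' a) (sw k ?S' z)))"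
    unfolding XX_def by (simp add: sum_subtractf right_diff_distrib)
  also have "\<dots> = (\<Sum>a<n. \<Sum>z<n. A a z * (kap k S g a z + kap k S g z a))"
  proof (intro sum.cong refl)
    fix a z
    show "A a z * (g (sw k S a) (sw k S z) - g (sw k ?S' a) (sw k ?S' z)) = A a z * (kap k S g a z + kap k S g z a)"
    proof (cases "a = z")
      case True then show ?thesis using A0 by simp
    next
      case False then show ?thesis using pointwise_odd[where g=g and k=k and S=S, OF gs False] by simp
    qed
  qed
  also have "\<dots> = (\<Sum>a<n. \<Sum>z<n. A a z * kap k S g a z) + (\<Sum>a<n. \<Sum>z<n. A a z * kap k S g z a)"
    by (simp add: distrib_left sum.distrib)
  also have "(\<Sum>a<n. \<Sum>z<n. A a z * kap k S g z a) = (\<Sum>z<n. \<Sum>a<n. A z a * kap k S g z a)"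
    by (subst sum.swap) (simp add: As)
  also have "(\<Sum>a<n. \<Sum>z<n. A a z * kap k S g a z) = (\<Sum>a<n. if a < 2 * k then sgnS S (a div 2) * C1 n k g A a else 0)"
  proof (intro sum.cong refl)
    fix a
    show "(\<Sum>z<n. A a z * kap k S g a z) = (if a < 2 * k then sgnS S (a div 2) * C1 n k g A a else 0)"
      unfolding kap_def C1_def by (auto simp: sum_distrib_left intro!: sum.cong)
  qed
  also have "\<dots> = (\<Sum>a<2*k. sgnS S (a div 2) * C1 n k g A a)"
  proof -
    have "{..<n} \<inter> {a. a < 2 * k} = {..<2*k}" using kn by auto
    then show ?thesis by (simp add: sum.If_cases)
  qed
  also have "\<dots> = (\<Sum>i<k. sgnS S i * Cc n k g A i)"
    unfolding sum_pairs_split Cc_def by (simp add: distrib_left)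
  finally show ?thesis by simp
qed

lemma exists_S_large:
  fixes g A :: "nat \<Rightarrow> nat \<Rightarrow> real"
  assumes gs: "\<And>x y. g x y = g y x" and As: "\<And>x y. A x y = A y x" and A0: "\<And>x. A x x = 0"
    and kn: "2 * k \<le> n"
  shows "\<exists>S. \<bar>XX n k g A S\<bar> \<ge> (\<Sum>i<k. \<bar>Cc n k g A i\<bar>)"
proof -
  define S0 where "S0 = {i. i < k \<and> Cc n k g A i < 0}"
  have "(\<Sum>i<k. sgnS S0 i * Cc n k g A i) = (\<Sum>i<k. \<bar>Cc n k g A i\<bar>)"
    by (intro sum.cong refl) (auto simp: sgnS_def S0_def)
  then have "XX n k g A S0 - XX n k g A ({..<k} - S0) = 2 * (\<Sum>i<k. \<bar>Cc n k g A i\<bar>)"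
    using odd_sum[OF gs As A0 kn, where S=S0] by simp
  then have "\<bar>XX n k g A S0\<bar> \<ge> (\<Sum>i<k. \<bar>Cc n k g A i\<bar>) \<or> \<bar>XX n k g A ({..<k} - S0)\<bar> \<ge> (\<Sum>i<k. \<bar>Cc n k g A i\<bar>)"
    by linarith
  then show ?thesis by blast
qed

definition cw :: "nat \<Rightarrow> nat \<Rightarrow> nat set \<Rightarrow> nat \<Rightarrow> nat" where
  "cw k L R v = (if 2 * k \<le> v \<and> v < 2 * k + 2 * L \<and> (v - 2 * k) div 2 \<in> R then partner v else v)"

lemma partner_range:
  "2 * k \<le> v \<Longrightarrow> v < 2 * k + 2 * L \<Longrightarrow> 2 * k \<le> partner v \<and> partner v < 2 * k + 2 * L"
  using partner_ge[of k v] partner_lt[of v "k + L"] by (simp add: algebra_simps)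

lemma cw_inv[simp]: "cw k L R (cw k L R v) = v"
proof (cases "2 * k \<le> v \<and> v < 2 * k + 2 * L \<and> (v - 2 * k) div 2 \<in> R")
  case True
  then have a: "2 * k \<le> v" "v < 2 * k + 2 * L" "(v - 2 * k) div 2 \<in> R" by auto
  have b: "2 * k \<le> partner v" "partner v < 2 * k + 2 * L" using partner_range a by auto
  have c: "(partner v - 2 * k) div 2 = (v - 2 * k) div 2" using a partner_couple by auto
  have "cw k L R v = partner v" using a by (simp add: cw_def)
  moreover have "cw k L R (partner v) = v" using a b c by (simp add: cw_def)
  ultimately show ?thesis by simp
next
  case False
  then have "cw k L R v = v" by (simp add: cw_def)
  then show ?thesis using False by simp
qed

lemma cw_small[simp]: "v < 2 * k \<Longrightarrow> cw k L R v = v"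
  by (simp add: cw_def)

lemma cw_permutes: "2 * k + 2 * L \<le> n \<Longrightarrow> cw k L R permutes {..<n}"
proof -
  assume kn: "2 * k + 2 * L \<le> n"
  have "cw k L R permutes {..<n}"
  proof (rule inj_imp_permutes)
    show "inj_on (cw k L R) {..<n}" by (rule inj_onI) (drule arg_cong[where f="cw k L R"], simp)
    show "\<And>x. x \<in> {..<n} \<Longrightarrow> cw k L R x \<in> {..<n}"
      using partner_range[of k _ L] kn by (force simp: cw_def)
    show "\<And>i. i \<notin> {..<n} \<Longrightarrow> cw k L R i = i" using kn by (auto simp: cw_def)
  qed simp
  then show ?thesis .
qed

lemma cw_couple0: "l < L \<Longrightarrow> cw k L R (2*k + 2*l) = (if l \<in> R then 2*k + 2*l + 1 else 2*k + 2*l)"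
  by (simp add: cw_def partner_def)

lemma cw_couple1: "l < L \<Longrightarrow> cw k L R (Suc (2*k + 2*l)) = (if l \<in> R then 2*k + 2*l else 2*k + 2*l + 1)"
proof -
  assume l: "l < L"
  have "(Suc (2*k + 2*l) - 2*k) div 2 = l" by simp
  then show ?thesis using l by (simp add: cw_def partner_def)
qed

definition AR :: "nat \<Rightarrow> nat \<Rightarrow> (nat \<Rightarrow> nat \<Rightarrow> real) \<Rightarrow> nat set \<Rightarrow> nat \<Rightarrow> nat \<Rightarrow> real" where
  "AR k L A0 R a z = A0 (cw k L R a) (cw k L R z)"

definition H0 :: "nat \<Rightarrow> (nat \<Rightarrow> nat \<Rightarrow> real) \<Rightarrow> (nat \<Rightarrow> nat \<Rightarrow> real) \<Rightarrow> nat \<Rightarrow> nat \<Rightarrow> real" where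
  "H0 k g A0 a l = A0 a (2*k+2*l) * (g a (2*k+2*l) - g (partner a) (2*k+2*l))
                 + A0 a (2*k+2*l+1) * (g a (2*k+2*l+1) - g (partner a) (2*k+2*l+1))"

definition H1 :: "nat \<Rightarrow> (nat \<Rightarrow> nat \<Rightarrow> real) \<Rightarrow> (nat \<Rightarrow> nat \<Rightarrow> real) \<Rightarrow> nat \<Rightarrow> nat \<Rightarrow> real" where
  "H1 k g A0 a l = A0 a (2*k+2*l) * (g a (2*k+2*l+1) - g (partner a) (2*k+2*l+1))
                 + A0 a (2*k+2*l+1) * (g a (2*k+2*l) - g (partner a) (2*k+2*l))"

definition K0 :: "nat \<Rightarrow> nat \<Rightarrow> nat \<Rightarrow> (nat \<Rightarrow> nat \<Rightarrow> real) \<Rightarrow> (nat \<Rightarrow> nat \<Rightarrow> real) \<Rightarrow> nat \<Rightarrow> real" where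
  "K0 n k L g A0 a = (\<Sum>z<2*k. if z = a \<or> z = partner a then 0 else A0 a z * psi k g a z)
      + (\<Sum>z\<in>{2*k+2*L..<n}. A0 a z * (g a z - g (partner a) z))"

lemma sum_shift_pairs:
  fixes h :: "nat \<Rightarrow> real"
  shows "(\<Sum>z\<in>{m..<m+2*L}. h z) = (\<Sum>l<L. h (m + 2*l) + h (m + 2*l + 1))"
proof (induction L)
  case 0 then show ?case by simp
next
  case (Suc L)
  have "{m..<m + 2 * Suc L} = insert (m+2*L+1) (insert (m+2*L) {m..<m+2*L})" by auto
  then have "(\<Sum>z\<in>{m..<m + 2 * Suc L}. h z) = h (m+2*L+1) + (h (m+2*L) + (\<Sum>z\<in>{m..<m+2*L}. h z))" by simp
  then show ?case using Suc by simp
qed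

lemma C1_AR:
  fixes g A0 :: "nat \<Rightarrow> nat \<Rightarrow> real"
  assumes kn: "2 * k + 2 * L \<le> n" and a: "a < 2 * k"
  shows "C1 n k g (AR k L A0 R) a = K0 n k L g A0 a + (\<Sum>l<L. if l \<in> R then H1 k g A0 a l else H0 k g A0 a l)"
proof -
  let ?c = "cw k L R"
  have pa: "partner a < 2 * k" using a partner_lt by auto
  have "C1 n k g (AR k L A0 R) a = (\<Sum>z<n. if z = a \<or> z = partner a then 0 else A0 a (?c z) * psi k g a z)"
    unfolding C1_def AR_def by (simp only: cw_small[OF a])
  also have "\<dots> = (\<Sum>z<n. if ?c z = a \<or> ?c z = partner a then 0 else A0 a (?c (?c z)) * psi k g a (?c z))"
    using sum.permute[OF cw_permutes[OF kn, of R]] by (simp add: o_def)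
  also have "\<dots> = (\<Sum>z<n. if z = a \<or> z = partner a then 0 else A0 a z * psi k g a (?c z))"
  proof (intro sum.cong refl)
    fix z
    have "?c z = a \<longleftrightarrow> z = a" using a by (metis cw_inv cw_small)
    moreover have "?c z = partner a \<longleftrightarrow> z = partner a" using pa by (metis cw_inv cw_small)
    ultimately show "(if ?c z = a \<or> ?c z = partner a then 0 else A0 a (?c (?c z)) * psi k g a (?c z))
        = (if z = a \<or> z = partner a then 0 else A0 a z * psi k g a (?c z))" by simp
  qed
  also have "\<dots> = (\<Sum>z\<in>{..<2*k} \<union> ({2*k..<2*k+2*L} \<union> {2*k+2*L..<n}). if z = a \<or> z = partner a then 0 else A0 a z * psi k g a (?c z))"
  proof -
    have "{..<n} = {..<2*k} \<union> ({2*k..<2*k+2*L} \<union> {2*k+2*L..<n})" using kn by auto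
    then show ?thesis by simp
  qed
  also have "\<dots> = (\<Sum>z<2*k. if z = a \<or> z = partner a then 0 else A0 a z * psi k g a (?c z))
      + ((\<Sum>z\<in>{2*k..<2*k+2*L}. if z = a \<or> z = partner a then 0 else A0 a z * psi k g a (?c z))
      + (\<Sum>z\<in>{2*k+2*L..<n}. if z = a \<or> z = partner a then 0 else A0 a z * psi k g a (?c z)))"
    by (subst sum.union_disjoint; auto)+
  also have "(\<Sum>z<2*k. if z = a \<or> z = partner a then 0 else A0 a z * psi k g a (?c z))
      = (\<Sum>z<2*k. if z = a \<or> z = partner a then 0 else A0 a z * psi k g a z)"
    by (intro sum.cong refl) simp
  also have "(\<Sum>z\<in>{2*k+2*L..<n}. if z = a \<or> z = partner a then 0 else A0 a z * psi k g a (?c z))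
      = (\<Sum>z\<in>{2*k+2*L..<n}. A0 a z * (g a z - g (partner a) z))"
  proof (intro sum.cong refl)
    fix z assume "z \<in> {2*k+2*L..<n}"
    then have "\<not> z < 2 * k" "?c z = z" "z \<noteq> a" "z \<noteq> partner a" using a pa by (auto simp: cw_def)
    then show "(if z = a \<or> z = partner a then 0 else A0 a z * psi k g a (?c z)) = A0 a z * (g a z - g (partner a) z)"
      by (simp add: psi_def)
  qed
  also have "(\<Sum>z\<in>{2*k..<2*k+2*L}. if z = a \<or> z = partner a then 0 else A0 a z * psi k g a (?c z))
      = (\<Sum>l<L. if l \<in> R then H1 k g A0 a l else H0 k g A0 a l)"
  proof -
    have "(\<Sum>z\<in>{2*k..<2*k+2*L}. if z = a \<or> z = partner a then 0 else A0 a z * psi k g a (?c z))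
        = (\<Sum>z\<in>{2*k..<2*k+2*L}. A0 a z * (g a (?c z) - g (partner a) (?c z)))"
    proof (intro sum.cong refl)
      fix z assume z: "z \<in> {2*k..<2*k+2*L}"
      then have "2 * k \<le> ?c z" using partner_range[of k z L] by (auto simp: cw_def)
      moreover have "z \<noteq> a" "z \<noteq> partner a" using z a pa by auto
      ultimately show "(if z = a \<or> z = partner a then 0 else A0 a z * psi k g a (?c z)) = A0 a z * (g a (?c z) - g (partner a) (?c z))"
        by (simp add: psi_def)
    qed
    also have "\<dots> = (\<Sum>l<L. A0 a (2*k+2*l) * (g a (?c (2*k+2*l)) - g (partner a) (?c (2*k+2*l)))
          + A0 a (2*k+2*l+1) * (g a (?c (2*k+2*l+1)) - g (partner a) (?c (2*k+2*l+1))))"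
      by (rule sum_shift_pairs)
    also have "\<dots> = (\<Sum>l<L. if l \<in> R then H1 k g A0 a l else H0 k g A0 a l)"
      by (intro sum.cong refl) (auto simp: cw_couple0 cw_couple1 H0_def H1_def)
    finally show ?thesis .
  qed
  finally show ?thesis unfolding K0_def by (simp add: algebra_simps)
qed

lemma Cc_AR:
  fixes g A0 :: "nat \<Rightarrow> nat \<Rightarrow> real"
  assumes kn: "2 * k + 2 * L \<le> n" and i: "i < k"
  shows "Cc n k g (AR k L A0 R) i = (K0 n k L g A0 (2*i) + K0 n k L g A0 (2*i+1))
     + (\<Sum>l<L. if l \<in> R then H1 k g A0 (2*i) l + H1 k g A0 (2*i+1) l else H0 k g A0 (2*i) l + H0 k g A0 (2*i+1) l)"
  unfolding Cc_def using i
  by (simp add: C1_AR[OF kn] sum.distrib[symmetric] if_distrib algebra_simps cong: if_cong)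

lemma H_diff:
  fixes g A0 :: "nat \<Rightarrow> nat \<Rightarrow> real"
  assumes gs: "\<And>x y. g x y = g y x"
  shows "(H0 k g A0 (2*i) l + H0 k g A0 (2*i+1) l) - (H1 k g A0 (2*i) l + H1 k g A0 (2*i+1) l)
    = (g (2*i) (2*k+2*l) - g (2*i+1) (2*k+2*l) - g (2*i) (2*k+2*l+1) + g (2*i+1) (2*k+2*l+1))
      * (A0 (2*i) (2*k+2*l) - A0 (2*i+1) (2*k+2*l) - A0 (2*i) (2*k+2*l+1) + A0 (2*i+1) (2*k+2*l+1))"
proof -
  have p0: "partner (2*i) = 2*i+1" and p1: "partner (2*i+1) = 2*i" by (auto simp: partner_def)
  show ?thesis unfolding H0_def H1_def p0 p1 by (simp add: algebra_simps)
qed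

definition Zs :: "nat \<Rightarrow> (nat \<Rightarrow> real) \<Rightarrow> nat set \<Rightarrow> real" where
  "Zs L b R = (\<Sum>l<L. if l \<in> R then - b l else b l)"

lemma Pow_lessThan_Suc:
  "Pow {..<Suc L} = Pow {..<L} \<union> insert L ` Pow {..<L}"
  by (simp add: lessThan_Suc Pow_insert)

lemma sum_Pow_Suc:
  fixes h :: "nat set \<Rightarrow> real"
  shows "(\<Sum>R\<in>Pow {..<Suc L}. h R) = (\<Sum>R\<in>Pow {..<L}. h R + h (insert L R))"
proof -
  have disj: "Pow {..<L} \<inter> insert L ` Pow {..<L} = {}" by auto
  have inj: "inj_on (insert L) (Pow {..<L})"
    by (rule inj_onI) (auto simp: insert_ident subset_eq dest: arg_cong[where f="\<lambda>X. X - {L}"])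
  show ?thesis
    unfolding Pow_lessThan_Suc
    by (subst sum.union_disjoint) (auto simp: disj sum.reindex[OF inj] sum.distrib)
qed

lemma Zs_Suc:
  assumes "R \<subseteq> {..<L}"
  shows "Zs (Suc L) b R = Zs L b R + b L" and "Zs (Suc L) b (insert L R) = Zs L b R - b L"
proof -
  have "L \<notin> R" using assms by auto
  then show "Zs (Suc L) b R = Zs L b R + b L" by (simp add: Zs_def)
  have "(\<Sum>l<L. if l \<in> insert L R then - b l else b l) = (\<Sum>l<L. if l \<in> R then - b l else b l)"
    by (intro sum.cong refl) auto
  then show "Zs (Suc L) b (insert L R) = Zs L b R - b L" by (simp add: Zs_def)
qed

lemma sum_Zs_Suc:
  fixes h :: "real \<Rightarrow> real"
  shows "(\<Sum>R\<in>Pow {..<Suc L}. h (Zs (Suc L) b R)) = (\<Sum>R\<in>Pow {..<L}. h (Zs L b R + b L) + h (Zs L b R - b L))"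
  unfolding sum_Pow_Suc by (intro sum.cong refl) (simp add: Zs_Suc)

lemma Zs_moment2: "(\<Sum>R\<in>Pow {..<L}. (Zs L b R)^2) = 2^L * (\<Sum>l<L. (b l)^2)"
proof (induction L)
  case 0 then show ?case by (simp add: Zs_def)
next
  case (Suc L)
  have "(\<Sum>R\<in>Pow {..<Suc L}. (Zs (Suc L) b R)^2) = (\<Sum>R\<in>Pow {..<L}. (Zs L b R + b L)^2 + (Zs L b R - b L)^2)"
    using sum_Zs_Suc[of "\<lambda>x. x^2" L b] by simp
  also have "\<dots> = (\<Sum>R\<in>Pow {..<L}. 2 * (Zs L b R)^2 + 2 * (b L)^2)"
    by (intro sum.cong refl) (simp add: power2_eq_square algebra_simps)
  also have "\<dots> = 2 * (\<Sum>R\<in>Pow {..<L}. (Zs L b R)^2) + 2 * 2^L * (b L)^2"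
    by (simp add: sum.distrib sum_distrib_left card_Pow)
  finally show ?case using Suc by (simp add: algebra_simps)
qed

lemma Zs_moment4: "(\<Sum>R\<in>Pow {..<L}. (Zs L b R)^4) \<le> 3 * 2^L * (\<Sum>l<L. (b l)^2)^2"
proof (induction L)
  case 0 then show ?case by (simp add: Zs_def)
next
  case (Suc L)
  let ?V = "\<Sum>l<L. (b l)^2"
  have "(\<Sum>R\<in>Pow {..<Suc L}. (Zs (Suc L) b R)^4) = (\<Sum>R\<in>Pow {..<L}. (Zs L b R + b L)^4 + (Zs L b R - b L)^4)"
    using sum_Zs_Suc[of "\<lambda>x. x^4" L b] by simp
  also have "\<dots> = (\<Sum>R\<in>Pow {..<L}. 2 * (Zs L b R)^4 + 12 * (b L)^2 * (Zs L b R)^2 + 2 * (b L)^4)"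
    by (intro sum.cong refl) (simp add: power2_eq_square power4_eq_xxxx algebra_simps)
  also have "\<dots> = 2 * (\<Sum>R\<in>Pow {..<L}. (Zs L b R)^4) + 12 * (b L)^2 * (\<Sum>R\<in>Pow {..<L}. (Zs L b R)^2) + 2 * 2^L * (b L)^4"
    by (simp add: sum.distrib sum_distrib_left card_Pow)
  also have "\<dots> \<le> 2 * (3 * 2^L * ?V^2) + 12 * (b L)^2 * (2^L * ?V) + 2 * 2^L * (b L)^4"
    using Suc Zs_moment2[of L b] by simp
  also have "\<dots> \<le> 3 * 2^(Suc L) * (?V + (b L)^2)^2"
  proof -
    have "0 \<le> (2::real)^L * (b L)^4" by simp
    then show ?thesis by (simp add: power2_eq_square power4_eq_xxxx algebra_simps)
  qed
  finally show ?case by simp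
qed

lemma abs_quartic_bound:
  fixes z t :: real
  assumes t: "t > 0"
  shows "\<bar>z\<bar> \<ge> 3 / (2 * t) * z^2 - 1 / (2 * t^3) * z^4"
proof -
  define w where "w = \<bar>z\<bar>"
  have w0: "w \<ge> 0" by (simp add: w_def)
  have z2: "z^2 = w^2" and z4: "z^4 = w^4" by (simp_all add: w_def power_even_abs_numeral)
  have "0 \<le> w * (w - t)^2 * (w + 2 * t)" using w0 t by simp
  also have "w * (w - t)^2 * (w + 2 * t) = w^4 - 3 * t^2 * w^2 + 2 * t^3 * w"
    by (simp add: power2_eq_square power4_eq_xxxx power3_eq_cube algebra_simps)
  finally have "3 * t^2 * w^2 - w^4 \<le> 2 * t^3 * w" by simp
  then have "(3 * t^2 * w^2 - w^4) / (2 * t^3) \<le> w" using t by (simp add: divide_le_eq mult.commute)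
  moreover have "(3 * t^2 * w^2 - w^4) / (2 * t^3) = 3 / (2 * t) * w^2 - 1 / (2 * t^3) * w^4"
    using t by (simp add: field_simps power2_eq_square power3_eq_cube)
  ultimately show ?thesis unfolding z2 z4 w_def by simp
qed

lemma khintchine_lower:
  fixes b :: "nat \<Rightarrow> real" and t :: real
  assumes t: "t > 0" and V: "2 * (\<Sum>l<L. (b l)^2) \<le> t^2"
  shows "(\<Sum>R\<in>Pow {..<L}. \<bar>Zs L b R\<bar>) \<ge> 2^L * (3 / (4 * t)) * (\<Sum>l<L. (b l)^2)"
proof -
  define V where "V = (\<Sum>l<L. (b l)^2)"
  define M where "M = (\<Sum>R\<in>Pow {..<L}. (Zs L b R)^4)"
  have V0: "V \<ge> 0" unfolding V_def by (simp add: sum_nonneg)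
  have VV: "2 * V \<le> t^2" using V unfolding V_def .
  have M: "M \<le> 3 * 2^L * V^2" unfolding M_def V_def by (rule Zs_moment4)
  have s1: "(\<Sum>R\<in>Pow {..<L}. 3 / (2 * t) * (Zs L b R)^2 - 1 / (2 * t^3) * (Zs L b R)^4)
      \<le> (\<Sum>R\<in>Pow {..<L}. \<bar>Zs L b R\<bar>)"
    by (intro sum_mono abs_quartic_bound[OF t])
  have s2: "(\<Sum>R\<in>Pow {..<L}. 3 / (2 * t) * (Zs L b R)^2 - 1 / (2 * t^3) * (Zs L b R)^4)
      = 3 / (2 * t) * (\<Sum>R\<in>Pow {..<L}. (Zs L b R)^2) - 1 / (2 * t^3) * M"
    unfolding M_def by (simp only: sum_subtractf sum_distrib_left)
  have s3: "(\<Sum>R\<in>Pow {..<L}. (Zs L b R)^2) = 2^L * V" unfolding V_def by (rule Zs_moment2)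
  have s4: "1 / (2 * t^3) * M \<le> 1 / (2 * t^3) * (3 * 2^L * V^2)"
    using M t by (intro mult_left_mono) auto
  have s5: "1 / (2 * t^3) * (3 * 2^L * V^2) = (3 / (2 * t) * (2^L * V)) * (V / t^2)"
    using t by (simp add: field_simps power2_eq_square power3_eq_cube)
  have s6: "V / t^2 \<le> 1/2" using VV t by (simp add: divide_le_eq)
  have s7: "(3 / (2 * t) * (2^L * V)) * (V / t^2) \<le> (3 / (2 * t) * (2^L * V)) * (1/2)"
    using s6 t V0 by (intro mult_left_mono) auto
  have s8: "3 / (2 * t) * (2^L * V) - (3 / (2 * t) * (2^L * V)) * (1/2) = 2^L * (3 / (4 * t)) * V"
    using t by (simp add: field_simps)
  have s2': "(\<Sum>R\<in>Pow {..<L}. 3 / (2 * t) * (Zs L b R)^2 - 1 / (2 * t^3) * (Zs L b R)^4)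
      = 3 / (2 * t) * (2^L * V) - 1 / (2 * t^3) * M"
    using s2 unfolding s3 .
  have "2^L * (3 / (4 * t)) * V \<le> (\<Sum>R\<in>Pow {..<L}. \<bar>Zs L b R\<bar>)"
    using s1 s2' s4 s5 s7 s8 by linarith
  then show ?thesis unfolding V_def .
qed

lemma sym_lower:
  fixes c :: real and p q :: "nat \<Rightarrow> real"
  shows "(\<Sum>R\<in>Pow {..<L}. \<bar>c + (\<Sum>l<L. if l \<in> R then p l else q l)\<bar>)
       \<ge> (\<Sum>R\<in>Pow {..<L}. \<bar>Zs L (\<lambda>l. (q l - p l) / 2) R\<bar>)"
proof -
  let ?b = "\<lambda>l. (q l - p l) / 2"
  define c' where "c' = c + (\<Sum>l<L. (p l + q l) / 2)"
  have eq: "c + (\<Sum>l<L. if l \<in> R then p l else q l) = c' + Zs L ?b R" for R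
    unfolding c'_def Zs_def by (simp add: sum.distrib[symmetric] add_divide_distrib[symmetric] algebra_simps)
      (intro sum.cong refl, auto simp: field_simps)
  have comp: "Zs L ?b ({..<L} - R) = - Zs L ?b R" for R
    unfolding Zs_def by (simp add: sum_negf[symmetric]) (intro sum.cong refl, auto)
  have bij: "bij_betw (\<lambda>R. {..<L} - R) (Pow {..<L}) (Pow {..<L})"
    by (rule bij_betwI[where g="\<lambda>R. {..<L} - R"]) auto
  have "(\<Sum>R\<in>Pow {..<L}. \<bar>c' - Zs L ?b R\<bar>) = (\<Sum>R\<in>Pow {..<L}. \<bar>c' + Zs L ?b R\<bar>)"
  proof -
    have "(\<Sum>R\<in>Pow {..<L}. \<bar>c' + Zs L ?b R\<bar>) = (\<Sum>R\<in>Pow {..<L}. \<bar>c' + Zs L ?b ({..<L} - R)\<bar>)"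
      using sum.reindex_bij_betw[OF bij, of "\<lambda>R. \<bar>c' + Zs L ?b R\<bar>"] by simp
    then show ?thesis by (simp add: comp)
  qed
  then have "2 * (\<Sum>R\<in>Pow {..<L}. \<bar>c' + Zs L ?b R\<bar>) = (\<Sum>R\<in>Pow {..<L}. \<bar>c' + Zs L ?b R\<bar> + \<bar>c' - Zs L ?b R\<bar>)"
    by (simp add: sum.distrib)
  also have "\<dots> \<ge> (\<Sum>R\<in>Pow {..<L}. 2 * \<bar>Zs L ?b R\<bar>)"
    by (intro sum_mono) linarith
  finally show ?thesis unfolding eq by (simp add: sum_distrib_left[symmetric])
qed

definition Alt :: "nat \<Rightarrow> (nat \<Rightarrow> nat \<Rightarrow> real) \<Rightarrow> nat \<Rightarrow> nat \<Rightarrow> real" where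
  "Alt k g i l = g (2*i) (2*k+2*l) - g (2*i+1) (2*k+2*l) - g (2*i) (2*k+2*l+1) + g (2*i+1) (2*k+2*l+1)"

definition Phi :: "nat \<Rightarrow> (nat \<Rightarrow> nat \<Rightarrow> real) \<Rightarrow> nat \<Rightarrow> nat \<Rightarrow> real" where
  "Phi k A0 i l = A0 (2*i) (2*k+2*l) - A0 (2*i+1) (2*k+2*l) - A0 (2*i) (2*k+2*l+1) + A0 (2*i+1) (2*k+2*l+1)"

lemma pm4:
  fixes x1 x2 x3 x4 :: real
  assumes "x1 = 1 \<or> x1 = -1" "x2 = 1 \<or> x2 = -1" "x3 = 1 \<or> x3 = -1" "x4 = 1 \<or> x4 = -1"
  shows "\<bar>x1 - x2 - x3 + x4\<bar> \<le> 4" "x1 - x2 - x3 + x4 \<noteq> 0 \<Longrightarrow> \<bar>x1 - x2 - x3 + x4\<bar> \<ge> 2"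
  using assms by auto

lemma z01:
  fixes y1 y2 y3 y4 :: real
  assumes "y1 = 0 \<or> y1 = 1" "y2 = 0 \<or> y2 = 1" "y3 = 0 \<or> y3 = 1" "y4 = 0 \<or> y4 = 1"
  shows "y1 - y2 - y3 + y4 \<noteq> 0 \<Longrightarrow> \<bar>y1 - y2 - y3 + y4\<bar> \<ge> 1"
    and "(y1 - y2 - y3 + y4)^2 \<le> 2 * (\<bar>y1 - y2\<bar> + \<bar>y3 - y4\<bar>)"
  using assms by (auto simp: power2_eq_square)

lemma z01b:
  fixes x y :: real
  assumes "x = 0 \<or> x = 1" "y = 0 \<or> y = 1"
  shows "\<bar>x - y\<bar> \<le> x + y" "\<bar>x - y\<bar> \<le> (1 - x) + (1 - y)"
  using assms by auto

locale slotdata =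
  fixes n k L d :: nat and g A0 :: "nat \<Rightarrow> nat \<Rightarrow> real"
  assumes kn: "2 * k + 2 * L \<le> n"
    and gs: "\<And>x y. g x y = g y x"
    and gpm: "\<And>x y. x < n \<Longrightarrow> y < n \<Longrightarrow> x \<noteq> y \<Longrightarrow> g x y = 1 \<or> g x y = -1"
    and As: "\<And>x y. A0 x y = A0 y x"
    and A00: "\<And>x. A0 x x = 0"
    and A01: "\<And>x y. A0 x y = 0 \<or> A0 x y = 1"
    and Arow: "\<And>a. a < n \<Longrightarrow> (\<Sum>z<n. A0 a z) = real d"
begin

definition bb :: "nat \<Rightarrow> nat \<Rightarrow> real" where
  "bb i l = Alt k g i l * Phi k A0 i l / 2"

lemma bb_lower:
  assumes i: "i < k" and l: "l < L" and ne: "Alt k g i l \<noteq> 0" "Phi k A0 i l \<noteq> 0"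
  shows "(bb i l)^2 \<ge> 1"
proof -
  have r: "2*i < n" "2*i+1 < n" "2*k+2*l < n" "2*k+2*l+1 < n" using i l kn by auto
  have dd: "2*i \<noteq> 2*k+2*l" "2*i+1 \<noteq> 2*k+2*l" "2*i \<noteq> 2*k+2*l+1" "2*i+1 \<noteq> 2*k+2*l+1" using i by auto
  have A: "\<bar>Alt k g i l\<bar> \<ge> 2" unfolding Alt_def
    using ne(1) r dd by (intro pm4(2) gpm) (auto simp: Alt_def)
  have P: "\<bar>Phi k A0 i l\<bar> \<ge> 1" unfolding Phi_def
    using ne(2) by (intro z01(1) A01) (auto simp: Phi_def)
  have "\<bar>Alt k g i l\<bar> * \<bar>Phi k A0 i l\<bar> \<ge> 2 * 1" by (rule mult_mono[OF A P]) auto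
  then have h: "\<bar>bb i l\<bar> \<ge> 1" unfolding bb_def by (simp add: abs_mult)
  have "1 ^ 2 \<le> \<bar>bb i l\<bar> ^ 2" by (rule power_mono[OF h]) simp
  then show ?thesis by simp
qed

lemma bb_upper:
  assumes i: "i < k" and l: "l < L"
  shows "(bb i l)^2 \<le> 8 * (\<bar>A0 (2*i) (2*k+2*l) - A0 (2*i+1) (2*k+2*l)\<bar> + \<bar>A0 (2*i) (2*k+2*l+1) - A0 (2*i+1) (2*k+2*l+1)\<bar>)"
proof -
  have r: "2*i < n" "2*i+1 < n" "2*k+2*l < n" "2*k+2*l+1 < n" using i l kn by auto
  have dd: "2*i \<noteq> 2*k+2*l" "2*i+1 \<noteq> 2*k+2*l" "2*i \<noteq> 2*k+2*l+1" "2*i+1 \<noteq> 2*k+2*l+1" using i by auto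
  have a4: "\<bar>Alt k g i l\<bar> \<le> 4" unfolding Alt_def
    using r dd by (intro pm4(1) gpm) auto
  have "\<bar>Alt k g i l\<bar>^2 \<le> 4^2" by (rule power_mono[OF a4]) simp
  then have "(Alt k g i l)^2 \<le> 16" by simp
  moreover have "(Phi k A0 i l)^2 \<le> 2 * (\<bar>A0 (2*i) (2*k+2*l) - A0 (2*i+1) (2*k+2*l)\<bar> + \<bar>A0 (2*i) (2*k+2*l+1) - A0 (2*i+1) (2*k+2*l+1)\<bar>)"
    unfolding Phi_def by (intro z01(2) A01)
  ultimately have "(Alt k g i l)^2 * (Phi k A0 i l)^2 \<le> 16 * (2 * (\<bar>A0 (2*i) (2*k+2*l) - A0 (2*i+1) (2*k+2*l)\<bar> + \<bar>A0 (2*i) (2*k+2*l+1) - A0 (2*i+1) (2*k+2*l+1)\<bar>))"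
    by (intro mult_mono) auto
  then show ?thesis unfolding bb_def by (simp add: power_mult_distrib power_divide)
qed


lemma A0_nonneg: "A0 x y \<ge> 0" using A01[of x y] by auto
lemma A0_le1: "A0 x y \<le> 1" using A01[of x y] by auto

lemma bb_sum_le_d:
  assumes i: "i < k"
  shows "(\<Sum>l<L. (bb i l)^2) \<le> 16 * real d"
proof -
  let ?p = "\<lambda>z. \<bar>A0 (2*i) z - A0 (2*i+1) z\<bar>"
  have "(\<Sum>l<L. (bb i l)^2) \<le> (\<Sum>l<L. 8 * (?p (2*k+2*l) + ?p (2*k+2*l+1)))"
    by (intro sum_mono bb_upper[OF i]) auto
  also have "\<dots> = 8 * (\<Sum>z\<in>{2*k..<2*k+2*L}. ?p z)"
    by (simp add: sum_shift_pairs sum_distrib_left)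
  also have "(\<Sum>z\<in>{2*k..<2*k+2*L}. ?p z) \<le> (\<Sum>z<n. ?p z)"
    using kn by (intro sum_mono2) auto
  also have "\<dots> \<le> (\<Sum>z<n. A0 (2*i) z + A0 (2*i+1) z)"
    by (intro sum_mono z01b(1) A01)
  also have "\<dots> = 2 * real d" using Arow[of "2*i"] Arow[of "2*i+1"] i kn by (simp add: sum.distrib)
  finally show ?thesis by simp
qed

lemma bb_sum_le_cd:
  assumes i: "i < k"
  shows "(\<Sum>l<L. (bb i l)^2) \<le> 16 * (real n - 1 - real d)"
proof -
  let ?p = "\<lambda>z. \<bar>A0 (2*i) z - A0 (2*i+1) z\<bar>"
  let ?q = "\<lambda>z. (1 - A0 (2*i) z) + (1 - A0 (2*i+1) z)"
  have ir: "2*i < n" "2*i+1 < n" using i kn by auto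
  have "(\<Sum>l<L. (bb i l)^2) \<le> (\<Sum>l<L. 8 * (?p (2*k+2*l) + ?p (2*k+2*l+1)))"
    by (intro sum_mono bb_upper[OF i]) auto
  also have "\<dots> = 8 * (\<Sum>z\<in>{2*k..<2*k+2*L}. ?p z)"
    by (simp add: sum_shift_pairs sum_distrib_left)
  also have "(\<Sum>z\<in>{2*k..<2*k+2*L}. ?p z) \<le> (\<Sum>z\<in>{2*k..<2*k+2*L}. ?q z)"
    by (intro sum_mono z01b(2) A01)
  also have "\<dots> \<le> (\<Sum>z\<in>{..<n} - {2*i, 2*i+1}. ?q z)"
  proof (rule sum_mono2)
    show "{2*k..<2*k+2*L} \<subseteq> {..<n} - {2*i, 2*i+1}" using i kn by auto
    show "\<And>b. b \<in> {..<n} - {2*i, 2*i+1} - {2*k..<2*k+2*L} \<Longrightarrow> 0 \<le> ?q b"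
      using A0_le1 by (smt (verit))
  qed simp
  also have "(\<Sum>z\<in>{..<n} - {2*i, 2*i+1}. ?q z) = (\<Sum>z<n. ?q z) - (?q (2*i) + ?q (2*i+1))"
    using ir by (subst sum_diff) auto
  also have "(\<Sum>z<n. ?q z) = 2 * real n - 2 * real d"
  proof -
    have "(\<Sum>z<n. ?q z) = (real n - (\<Sum>z<n. A0 (2*i) z)) + (real n - (\<Sum>z<n. A0 (2*i+1) z))"
      by (simp only: sum.distrib sum_subtractf) simp
    then show ?thesis using Arow[OF ir(1)] Arow[OF ir(2)] by simp
  qed
  also have "?q (2*i) + ?q (2*i+1) = 4 - 2 * A0 (2*i) (2*i+1)"
    using A00[of "2*i"] A00[of "2*i+1"] As[of "2*i" "2*i+1"] by simp
  finally have "(\<Sum>l<L. (bb i l)^2) \<le> 8 * (2 * real n - 2 * real d - (4 - 2 * A0 (2*i) (2*i+1)))" by simp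
  also have "\<dots> \<le> 16 * (real n - 1 - real d)" using A0_le1[of "2*i" "2*i+1"] by simp
  finally show ?thesis .
qed

lemma core_fixed:
  assumes t: "t > 0" and tt: "32 * real d \<le> t^2 \<or> 32 * (real n - 1 - real d) \<le> t^2"
  shows "(\<Sum>R\<in>Pow {..<L}. \<Sum>i<k. \<bar>Cc n k g (AR k L A0 R) i\<bar>)
      \<ge> 2^L * (3 / (4 * t)) * (\<Sum>i<k. \<Sum>l<L. if Alt k g i l \<noteq> 0 \<and> Phi k A0 i l \<noteq> 0 then 1 else 0)"
proof -
  have each: "(\<Sum>R\<in>Pow {..<L}. \<bar>Cc n k g (AR k L A0 R) i\<bar>)
      \<ge> 2^L * (3 / (4 * t)) * (\<Sum>l<L. if Alt k g i l \<noteq> 0 \<and> Phi k A0 i l \<noteq> 0 then 1 else 0)" if i: "i < k" for i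
  proof -
    let ?K = "K0 n k L g A0 (2*i) + K0 n k L g A0 (2*i+1)"
    let ?p = "\<lambda>l. H1 k g A0 (2*i) l + H1 k g A0 (2*i+1) l"
    let ?q = "\<lambda>l. H0 k g A0 (2*i) l + H0 k g A0 (2*i+1) l"
    have qp: "(?q l - ?p l) / 2 = bb i l" for l
      unfolding bb_def Alt_def Phi_def using H_diff[of g k A0 i l, OF gs] by simp
    have "(\<Sum>R\<in>Pow {..<L}. \<bar>Cc n k g (AR k L A0 R) i\<bar>)
        = (\<Sum>R\<in>Pow {..<L}. \<bar>?K + (\<Sum>l<L. if l \<in> R then ?p l else ?q l)\<bar>)"
      using Cc_AR[OF kn i] by simp
    also have "\<dots> \<ge> (\<Sum>R\<in>Pow {..<L}. \<bar>Zs L (\<lambda>l. (?q l - ?p l) / 2) R\<bar>)"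
      by (rule sym_lower)
    finally have 1: "(\<Sum>R\<in>Pow {..<L}. \<bar>Cc n k g (AR k L A0 R) i\<bar>) \<ge> (\<Sum>R\<in>Pow {..<L}. \<bar>Zs L (bb i) R\<bar>)"
      unfolding qp .
    have V: "2 * (\<Sum>l<L. (bb i l)^2) \<le> t^2"
      using tt bb_sum_le_d[OF i] bb_sum_le_cd[OF i] by linarith
    have 2: "(\<Sum>R\<in>Pow {..<L}. \<bar>Zs L (bb i) R\<bar>) \<ge> 2^L * (3 / (4 * t)) * (\<Sum>l<L. (bb i l)^2)"
      by (rule khintchine_lower[OF t V])
    have 3: "(\<Sum>l<L. (bb i l)^2) \<ge> (\<Sum>l<L. if Alt k g i l \<noteq> 0 \<and> Phi k A0 i l \<noteq> 0 then 1 else 0)"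
      by (intro sum_mono) (auto intro: bb_lower[OF i])
    have "2^L * (3 / (4 * t)) * (\<Sum>l<L. if Alt k g i l \<noteq> 0 \<and> Phi k A0 i l \<noteq> 0 then 1 else 0)
        \<le> 2^L * (3 / (4 * t)) * (\<Sum>l<L. (bb i l)^2)"
      using 3 t by (intro mult_left_mono) auto
    then show ?thesis using 1 2 by linarith
  qed
  have "(\<Sum>R\<in>Pow {..<L}. \<Sum>i<k. \<bar>Cc n k g (AR k L A0 R) i\<bar>) = (\<Sum>i<k. \<Sum>R\<in>Pow {..<L}. \<bar>Cc n k g (AR k L A0 R) i\<bar>)"
    by (rule sum.swap)
  also have "\<dots> \<ge> (\<Sum>i<k. 2^L * (3 / (4 * t)) * (\<Sum>l<L. if Alt k g i l \<noteq> 0 \<and> Phi k A0 i l \<noteq> 0 then 1 else 0))"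
    by (intro sum_mono each) auto
  finally show ?thesis by (simp add: sum_distrib_left)
qed

end

definition adjF :: "nat set set \<Rightarrow> nat \<Rightarrow> nat \<Rightarrow> real" where
  "adjF F x y = (if {x, y} \<in> F then 1 else 0)"

definition altf :: "(nat set \<Rightarrow> int) \<Rightarrow> nat list \<Rightarrow> real" where
  "altf f ys = real_of_int (f {ys!0, ys!2}) - real_of_int (f {ys!1, ys!2})
             - real_of_int (f {ys!0, ys!3}) + real_of_int (f {ys!1, ys!3})"

definition phiF :: "nat set set \<Rightarrow> nat list \<Rightarrow> real" where
  "phiF F ys = adjF F (ys!0) (ys!2) - adjF F (ys!1) (ys!2) - adjF F (ys!0) (ys!3) + adjF F (ys!1) (ys!3)"

definition Tf :: "nat \<Rightarrow> (nat set \<Rightarrow> int) \<Rightarrow> real" where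
  "Tf n f = (\<Sum>ys\<in>dlists 4 {..<n}. if altf f ys \<noteq> 0 then 1 else 0)"

definition TF :: "nat \<Rightarrow> nat set set \<Rightarrow> real" where
  "TF n F = (\<Sum>ys\<in>dlists 4 {..<n}. if phiF F ys \<noteq> 0 then 1 else 0)"

definition gB :: "(nat set \<Rightarrow> int) \<Rightarrow> (nat \<Rightarrow> nat) \<Rightarrow> nat \<Rightarrow> nat \<Rightarrow> real" where
  "gB f \<beta> x y = real_of_int (f {\<beta> x, \<beta> y})"

definition AF :: "nat set set \<Rightarrow> (nat \<Rightarrow> nat) \<Rightarrow> nat \<Rightarrow> nat \<Rightarrow> real" where
  "AF F \<rho> x y = adjF F (\<rho> x) (\<rho> y)"

lemma slotdata_inst:
  assumes G: "graph_on n F" and R: "regular n F d"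
    and fpm: "\<forall>e\<in>Kn_edges n. f e = 1 \<or> f e = -1"
    and kn: "2 * k + 2 * L \<le> n" and \<rho>: "\<rho> permutes {..<n}" and \<beta>: "\<beta> permutes {..<n}"
  shows "slotdata n k L d (gB f \<beta>) (AF F \<rho>)"
proof
  show "2 * k + 2 * L \<le> n" by (rule kn)
  show "gB f \<beta> x y = gB f \<beta> y x" for x y by (simp add: gB_def insert_commute)
  show "gB f \<beta> x y = 1 \<or> gB f \<beta> x y = -1" if "x < n" "y < n" "x \<noteq> y" for x y
  proof -
    have "\<beta> x < n" "\<beta> y < n" "\<beta> x \<noteq> \<beta> y"
      using that permutes_in_image[OF \<beta>] permutes_inj[OF \<beta>] by (auto dest: injD)
    then have "{\<beta> x, \<beta> y} \<in> Kn_edges n" by (simp add: Kn_mem)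
    then show ?thesis using fpm by (auto simp: gB_def)
  qed
  show "AF F \<rho> x y = AF F \<rho> y x" for x y by (simp add: AF_def adjF_def insert_commute)
  show "AF F \<rho> x x = 0" for x
  proof -
    have "{\<rho> x, \<rho> x} \<notin> F" using G by (auto simp: graph_on_def Kn_edges_def)
    then show ?thesis by (simp add: AF_def adjF_def)
  qed
  show "AF F \<rho> x y = 0 \<or> AF F \<rho> x y = 1" for x y by (simp add: AF_def adjF_def)
  show "(\<Sum>z<n. AF F \<rho> a z) = real d" if a: "a < n" for a
  proof -
    have "(\<Sum>z<n. AF F \<rho> a z) = (\<Sum>z<n. (\<lambda>u. if {\<rho> a, u} \<in> F then 1 else 0) (\<rho> z))"
      by (simp add: AF_def adjF_def)
    also have "\<dots> = (\<Sum>u<n. if {\<rho> a, u} \<in> F then (1::real) else 0)"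
      using sum.permute[OF \<rho>, of "\<lambda>u. if {\<rho> a, u} \<in> F then (1::real) else 0"] by (simp add: o_def)
    also have "\<dots> = real d" using regular_sum[OF G R] a permutes_in_image[OF \<rho>] by simp
    finally show ?thesis .
  qed
qed

lemma double_permute:
  fixes h :: "nat \<Rightarrow> nat \<Rightarrow> real"
  assumes p: "p permutes {..<n}"
  shows "(\<Sum>u<n. \<Sum>v<n. h u v) = (\<Sum>a<n. \<Sum>z<n. h (p a) (p z))"
proof -
  have "(\<Sum>u<n. \<Sum>v<n. h u v) = (\<Sum>u<n. \<Sum>z<n. h u (p z))"
  proof (rule sum.cong[OF refl])
    fix u show "(\<Sum>v<n. h u v) = (\<Sum>z<n. h u (p z))"
      using sum.permute[OF p, of "h u"] by (simp add: o_def)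
  qed
  also have "\<dots> = (\<Sum>a<n. \<Sum>z<n. h (p a) (p z))"
    using sum.permute[OF p, of "\<lambda>u. \<Sum>z<n. h u (p z)"] by (simp add: o_def)
  finally show ?thesis .
qed

lemma XX_copy:
  fixes S R :: "nat set" and f :: "nat set \<Rightarrow> int"
  assumes G: "graph_on n F" and kn: "2 * k + 2 * L \<le> n"
    and \<rho>: "\<rho> permutes {..<n}" and \<beta>: "\<beta> permutes {..<n}"
  defines "\<sigma> \<equiv> \<beta> \<circ> sw k S \<circ> cw k L R \<circ> inv \<rho>"
  shows "\<sigma> permutes {..<n}"
    and "XX n k (gB f \<beta>) (AR k L (AF F \<rho>) R) S = 2 * (\<Sum>e\<in>F. real_of_int (f (\<sigma> ` e)))"
proof -
  have swp: "sw k S permutes {..<n}" using kn by (intro sw_permutes) simp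
  have cwp: "cw k L R permutes {..<n}" using kn by (rule cw_permutes)
  show sp: "\<sigma> permutes {..<n}" unfolding \<sigma>_def
    by (intro permutes_compose permutes_inv \<rho> \<beta> swp cwp)
  have sr: "\<sigma> (\<rho> a) = \<beta> (sw k S (cw k L R a))" for a
    unfolding \<sigma>_def by (simp add: permutes_inverses(2)[OF \<rho>])
  have "2 * (\<Sum>e\<in>F. real_of_int (f (\<sigma> ` e))) = (\<Sum>u<n. \<Sum>v<n. if {u,v} \<in> F then real_of_int (f (\<sigma> ` {u,v})) else 0)"
    by (rule sum_F_ordered[OF G])
  also have "\<dots> = (\<Sum>u<n. \<Sum>v<n. adjF F u v * real_of_int (f {\<sigma> u, \<sigma> v}))"
    by (intro sum.cong refl) (simp add: adjF_def)
  also have "\<dots> = (\<Sum>a<n. \<Sum>z<n. adjF F (\<rho> a) (\<rho> z) * real_of_int (f {\<sigma> (\<rho> a), \<sigma> (\<rho> z)}))"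
    by (rule double_permute[OF \<rho>])
  also have "\<dots> = (\<Sum>a<n. \<Sum>z<n. AF F \<rho> a z * gB f \<beta> (sw k S (cw k L R a)) (sw k S (cw k L R z)))"
    by (simp add: sr AF_def gB_def)
  also have "\<dots> = (\<Sum>a<n. \<Sum>z<n. AF F \<rho> (cw k L R a) (cw k L R z) * gB f \<beta> (sw k S a) (sw k S z))"
    using double_permute[OF cwp, of "\<lambda>a z. AF F \<rho> a z * gB f \<beta> (sw k S (cw k L R a)) (sw k S (cw k L R z))"]
    by simp
  also have "\<dots> = XX n k (gB f \<beta>) (AR k L (AF F \<rho>) R) S"
    by (simp add: XX_def AR_def)
  finally show "XX n k (gB f \<beta>) (AR k L (AF F \<rho>) R) S = 2 * (\<Sum>e\<in>F. real_of_int (f (\<sigma> ` e)))" by simp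
qed

lemma Alt_gB: "Alt k (gB f \<beta>) i l = altf f (map \<beta> [2*i, 2*i+1, 2*k+2*l, 2*k+2*l+1])"
  by (simp add: Alt_def altf_def gB_def)

lemma Phi_AF: "Phi k (AF F \<rho>) i l = phiF F (map \<rho> [2*i, 2*i+1, 2*k+2*l, 2*k+2*l+1])"
  by (simp add: Phi_def phiF_def AF_def)

lemma tuple_ok:
  fixes i k l L n :: nat
  assumes "i < k" "l < L" "2 * k + 2 * L \<le> n"
  shows "set [2*i, 2*i+1, 2*k+2*l, 2*k+2*l+1] \<subseteq> {..<n}" "distinct [2*i, 2*i+1, 2*k+2*l, 2*k+2*l+1]"
proof -
  have "2*i < 2*k" "2*i+1 < 2*k" "2*k+2*l+1 < 2*k+2*L" using assms by auto
  then show "set [2*i, 2*i+1, 2*k+2*l, 2*k+2*l+1] \<subseteq> {..<n}" using assms(3) by auto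
  show "distinct [2*i, 2*i+1, 2*k+2*l, 2*k+2*l+1]" using assms(1) by auto
qed

lemma sum_prod_indep:
  fixes a b :: "'a \<Rightarrow> real"
  shows "(\<Sum>x\<in>A. \<Sum>y\<in>B. a y * b x) = (\<Sum>y\<in>B. a y) * (\<Sum>x\<in>A. b x)"
  unfolding sum_product by (rule sum.swap)

lemma swap_inner3:
  fixes h :: "'a \<Rightarrow> 'b \<Rightarrow> 'c \<Rightarrow> real"
  shows "(\<Sum>b\<in>B. \<Sum>c\<in>C. \<Sum>d\<in>D. h b c d) = (\<Sum>c\<in>C. \<Sum>d\<in>D. \<Sum>b\<in>B. h b c d)"
proof -
  have "(\<Sum>b\<in>B. \<Sum>c\<in>C. \<Sum>d\<in>D. h b c d) = (\<Sum>c\<in>C. \<Sum>b\<in>B. \<Sum>d\<in>D. h b c d)"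
    by (rule sum.swap)
  also have "\<dots> = (\<Sum>c\<in>C. \<Sum>d\<in>D. \<Sum>b\<in>B. h b c d)"
    by (rule sum.cong[OF refl]) (rule sum.swap)
  finally show ?thesis .
qed

lemma swap4:
  fixes h :: "'a \<Rightarrow> 'b \<Rightarrow> 'c \<Rightarrow> 'e \<Rightarrow> real"
  shows "(\<Sum>a\<in>A. \<Sum>b\<in>B. \<Sum>c\<in>C. \<Sum>d\<in>D. h a b c d) = (\<Sum>c\<in>C. \<Sum>d\<in>D. \<Sum>a\<in>A. \<Sum>b\<in>B. h a b c d)"
proof -
  have "(\<Sum>a\<in>A. \<Sum>b\<in>B. \<Sum>c\<in>C. \<Sum>d\<in>D. h a b c d) = (\<Sum>a\<in>A. \<Sum>c\<in>C. \<Sum>d\<in>D. \<Sum>b\<in>B. h a b c d)"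
    by (rule sum.cong[OF refl]) (rule swap_inner3)
  also have "\<dots> = (\<Sum>c\<in>C. \<Sum>d\<in>D. \<Sum>a\<in>A. \<Sum>b\<in>B. h a b c d)"
    by (rule swap_inner3)
  finally show ?thesis .
qed

lemma main_exists:
  fixes f :: "nat set \<Rightarrow> int" and t :: real
  assumes G: "graph_on n F" and R: "regular n F d"
    and fpm: "\<forall>e\<in>Kn_edges n. f e = 1 \<or> f e = -1"
    and kn: "2 * k + 2 * L \<le> n" and n4: "4 \<le> n"
    and t: "t > 0" and tt: "32 * real d \<le> t^2 \<or> 32 * (real n - 1 - real d) \<le> t^2"
  shows "\<exists>H. is_copy n F H \<and>
     2 * \<bar>\<Sum>e\<in>H. real_of_int (f e)\<bar> * (fact n)^2 \<ge> (3 / (4 * t)) * real k * real L * (fact (n - 4))^2 * Tf n f * TF n F"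
proof -
  let ?P = "{\<sigma>. \<sigma> permutes {..<n}}"
  let ?Q = "Pow {..<L}"
  let ?c = "3 / (4 * t)"
  let ?Y = "\<lambda>\<rho> \<beta> R. \<Sum>i<k. \<bar>Cc n k (gB f \<beta>) (AR k L (AF F \<rho>) R) i\<bar>"
  let ?I = "\<lambda>\<rho> \<beta> i l. if Alt k (gB f \<beta>) i l \<noteq> 0 \<and> Phi k (AF F \<rho>) i l \<noteq> 0 then (1::real) else 0"
  have finP: "finite ?P" by (rule finite_permutations) simp
  have cardP: "real (card ?P) = fact n" using card_permutations[of "{..<n}" n] by simp
  have fix1: "(\<Sum>R\<in>?Q. ?Y \<rho> \<beta> R) \<ge> 2^L * ?c * (\<Sum>i<k. \<Sum>l<L. ?I \<rho> \<beta> i l)"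
    if "\<rho> \<in> ?P" "\<beta> \<in> ?P" for \<rho> \<beta>
  proof -
    interpret slotdata n k L d "gB f \<beta>" "AF F \<rho>"
      by (rule slotdata_inst[OF G R fpm kn]) (use that in auto)
    show ?thesis using core_fixed[OF t tt] by simp
  qed
  have sumI: "(\<Sum>\<rho>\<in>?P. \<Sum>\<beta>\<in>?P. ?I \<rho> \<beta> i l) = fact (n - 4) * Tf n f * (fact (n - 4) * TF n F)"
    if il: "i < k" "l < L" for i l
  proof -
    let ?xs = "[2*i, 2*i+1, 2*k+2*l, 2*k+2*l+1]"
    have "(\<Sum>\<rho>\<in>?P. \<Sum>\<beta>\<in>?P. ?I \<rho> \<beta> i l)
        = (\<Sum>\<rho>\<in>?P. \<Sum>\<beta>\<in>?P. (if altf f (map \<beta> ?xs) \<noteq> 0 then 1 else 0) * (if phiF F (map \<rho> ?xs) \<noteq> 0 then 1 else 0))"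
      by (intro sum.cong refl) (simp add: Alt_gB Phi_AF)
    also have "\<dots> = (\<Sum>\<beta>\<in>?P. if altf f (map \<beta> ?xs) \<noteq> 0 then 1 else 0) * (\<Sum>\<rho>\<in>?P. if phiF F (map \<rho> ?xs) \<noteq> 0 then 1 else 0)"
      by (rule sum_prod_indep)
    also have "(\<Sum>\<beta>\<in>?P. if altf f (map \<beta> ?xs) \<noteq> 0 then 1 else 0) = fact (n - 4) * Tf n f"
      using sum_perm_tuple[of "{..<n}" ?xs "\<lambda>ys. if altf f ys \<noteq> 0 then 1 else 0"] tuple_ok[OF il kn]
      by (simp add: Tf_def eval_nat_numeral)
    also have "(\<Sum>\<rho>\<in>?P. if phiF F (map \<rho> ?xs) \<noteq> 0 then 1 else 0) = fact (n - 4) * TF n F"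
      using sum_perm_tuple[of "{..<n}" ?xs "\<lambda>ys. if phiF F ys \<noteq> 0 then 1 else 0"] tuple_ok[OF il kn]
      by (simp add: TF_def eval_nat_numeral)
    finally show ?thesis .
  qed
  let ?T = "?P \<times> (?P \<times> ?Q)"
  have finT: "finite ?T" using finP by simp
  have neT: "?T \<noteq> {}" using permutes_id[of "{..<n}"] by blast
  have cardT: "real (card ?T) = fact n * fact n * 2^L"
    using cardP finP by (simp add: card_cartesian_product card_Pow)
  have "(\<Sum>p\<in>?T. ?Y (fst p) (fst (snd p)) (snd (snd p))) = (\<Sum>\<rho>\<in>?P. \<Sum>\<beta>\<in>?P. \<Sum>R\<in>?Q. ?Y \<rho> \<beta> R)"
    by (simp add: sum.cartesian_product')
  also have "\<dots> \<ge> (\<Sum>\<rho>\<in>?P. \<Sum>\<beta>\<in>?P. 2^L * ?c * (\<Sum>i<k. \<Sum>l<L. ?I \<rho> \<beta> i l))"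
    by (intro sum_mono fix1) auto
  also have "(\<Sum>\<rho>\<in>?P. \<Sum>\<beta>\<in>?P. 2^L * ?c * (\<Sum>i<k. \<Sum>l<L. ?I \<rho> \<beta> i l))
      = 2^L * ?c * (\<Sum>i<k. \<Sum>l<L. \<Sum>\<rho>\<in>?P. \<Sum>\<beta>\<in>?P. ?I \<rho> \<beta> i l)"
  proof -
    have "(\<Sum>\<rho>\<in>?P. \<Sum>\<beta>\<in>?P. \<Sum>i<k. \<Sum>l<L. ?I \<rho> \<beta> i l) = (\<Sum>i<k. \<Sum>l<L. \<Sum>\<rho>\<in>?P. \<Sum>\<beta>\<in>?P. ?I \<rho> \<beta> i l)"
      by (rule swap4)
    moreover have "(\<Sum>\<rho>\<in>?P. \<Sum>\<beta>\<in>?P. 2^L * ?c * (\<Sum>i<k. \<Sum>l<L. ?I \<rho> \<beta> i l))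
        = 2^L * ?c * (\<Sum>\<rho>\<in>?P. \<Sum>\<beta>\<in>?P. \<Sum>i<k. \<Sum>l<L. ?I \<rho> \<beta> i l)"
      by (simp only: sum_distrib_left)
    ultimately show ?thesis by simp
  qed
  also have "(\<Sum>i<k. \<Sum>l<L. \<Sum>\<rho>\<in>?P. \<Sum>\<beta>\<in>?P. ?I \<rho> \<beta> i l) = real k * real L * (fact (n - 4) * Tf n f * (fact (n - 4) * TF n F))"
    by (simp add: sumI)
  finally have tot: "(\<Sum>p\<in>?T. ?Y (fst p) (fst (snd p)) (snd (snd p))) \<ge> 2^L * ?c * (real k * real L * (fact (n - 4) * Tf n f * (fact (n - 4) * TF n F)))" .
  obtain p where p: "p \<in> ?T" "?Y (fst p) (fst (snd p)) (snd (snd p)) * real (card ?T) \<ge> (\<Sum>p\<in>?T. ?Y (fst p) (fst (snd p)) (snd (snd p)))"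
    using exists_ge_avg[OF finT neT] by blast
  define \<rho> where "\<rho> = fst p"
  define \<beta> where "\<beta> = fst (snd p)"
  define R where "R = snd (snd p)"
  have \<rho>: "\<rho> permutes {..<n}" and \<beta>: "\<beta> permutes {..<n}" using p(1) by (auto simp: \<rho>_def \<beta>_def)
  have Ybig: "?Y \<rho> \<beta> R * (fact n * fact n * 2^L) \<ge> 2^L * ?c * (real k * real L * (fact (n - 4) * Tf n f * (fact (n - 4) * TF n F)))"
    using p(2)[unfolded cardT] tot unfolding \<rho>_def \<beta>_def R_def by linarith
  interpret slotdata n k L d "gB f \<beta>" "AF F \<rho>" by (rule slotdata_inst[OF G R fpm kn \<rho> \<beta>])
  have ARs: "AR k L (AF F \<rho>) R x y = AR k L (AF F \<rho>) R y x" for x y by (simp add: AR_def As)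
  have AR0: "AR k L (AF F \<rho>) R x x = 0" for x by (simp add: AR_def A00)
  obtain S where S: "\<bar>XX n k (gB f \<beta>) (AR k L (AF F \<rho>) R) S\<bar> \<ge> ?Y \<rho> \<beta> R"
    using exists_S_large[where g="gB f \<beta>" and A="AR k L (AF F \<rho>) R" and k=k and n=n, OF gs ARs AR0] kn by auto
  define \<sigma> where "\<sigma> = \<beta> \<circ> sw k S \<circ> cw k L R \<circ> inv \<rho>"
  have sp: "\<sigma> permutes {..<n}" unfolding \<sigma>_def by (rule XX_copy(1)[OF G kn \<rho> \<beta>])
  have XXe: "XX n k (gB f \<beta>) (AR k L (AF F \<rho>) R) S = 2 * (\<Sum>e\<in>F. real_of_int (f (\<sigma> ` e)))"
    unfolding \<sigma>_def by (rule XX_copy(2)[OF G kn \<rho> \<beta>])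
  define H where "H = (\<lambda>e. \<sigma> ` e) ` F"
  have Hc: "is_copy n F H" unfolding H_def by (rule copy_sum(1)[OF sp])
  have Hs: "(\<Sum>e\<in>H. real_of_int (f e)) = (\<Sum>e\<in>F. real_of_int (f (\<sigma> ` e)))"
    unfolding H_def by (rule copy_sum(2)[OF sp])
  have "2 * \<bar>\<Sum>e\<in>H. real_of_int (f e)\<bar> \<ge> ?Y \<rho> \<beta> R" using S XXe Hs by simp
  then have "2 * \<bar>\<Sum>e\<in>H. real_of_int (f e)\<bar> * (fact n * fact n * 2^L) \<ge> ?Y \<rho> \<beta> R * (fact n * fact n * 2^L)"
    by (intro mult_right_mono) auto
  with Ybig have A: "2 * \<bar>\<Sum>e\<in>H. real_of_int (f e)\<bar> * (fact n * fact n * 2^L) \<ge> 2^L * ?c * (real k * real L * (fact (n - 4) * Tf n f * (fact (n - 4) * TF n F)))"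
    by linarith
  have e1: "2 * \<bar>\<Sum>e\<in>H. real_of_int (f e)\<bar> * (fact n * fact n * 2^L) = (2 * \<bar>\<Sum>e\<in>H. real_of_int (f e)\<bar> * (fact n)^2) * 2^L"
    by (simp add: power2_eq_square)
  have e2: "2^L * ?c * (real k * real L * (fact (n - 4) * Tf n f * (fact (n - 4) * TF n F))) = (?c * real k * real L * (fact (n - 4))^2 * Tf n f * TF n F) * 2^L"
    by (simp add: power2_eq_square)
  from A have "2 * \<bar>\<Sum>e\<in>H. real_of_int (f e)\<bar> * (fact n)^2 * 2^L \<ge> (?c * real k * real L * (fact (n - 4))^2 * Tf n f * TF n F) * 2^L"
    unfolding e1 e2 .
  then have "2 * \<bar>\<Sum>e\<in>H. real_of_int (f e)\<bar> * (fact n)^2 \<ge> ?c * real k * real L * (fact (n - 4))^2 * Tf n f * TF n F"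
    by (rule mult_right_le_imp_le) simp
  with Hc show ?thesis by blast
qed

lemma sq_diff_sum:
  fixes x :: "'a \<Rightarrow> real"
  assumes "finite W"
  shows "(\<Sum>c\<in>W. \<Sum>e\<in>W. (x c - x e)^2) = 2 * real (card W) * (\<Sum>c\<in>W. (x c)^2) - 2 * (\<Sum>c\<in>W. x c)^2"
proof -
  have "(\<Sum>c\<in>W. \<Sum>e\<in>W. (x c - x e)^2) = (\<Sum>c\<in>W. \<Sum>e\<in>W. (x c)^2 + (x e)^2 - 2 * (x c * x e))"
    by (intro sum.cong refl) (simp add: power2_diff)
  also have "\<dots> = (\<Sum>c\<in>W. real (card W) * (x c)^2 + (\<Sum>e\<in>W. (x e)^2) - 2 * (x c * (\<Sum>e\<in>W. x e)))"
    by (intro sum.cong refl) (simp add: sum.distrib sum_subtractf sum_distrib_left)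
  also have "\<dots> = (\<Sum>c\<in>W. real (card W) * (x c)^2) + (\<Sum>c\<in>W. \<Sum>e\<in>W. (x e)^2) - (\<Sum>c\<in>W. 2 * (x c * (\<Sum>e\<in>W. x e)))"
    by (simp only: sum.distrib sum_subtractf)
  also have "(\<Sum>c\<in>W. real (card W) * (x c)^2) = real (card W) * (\<Sum>c\<in>W. (x c)^2)"
    by (simp add: sum_distrib_left)
  also have "(\<Sum>c\<in>W. \<Sum>e\<in>W. (x e)^2) = real (card W) * (\<Sum>c\<in>W. (x c)^2)" by simp
  also have "(\<Sum>c\<in>W. 2 * (x c * (\<Sum>e\<in>W. x e))) = 2 * (\<Sum>c\<in>W. x c)^2"
    by (simp add: sum_distrib_right[symmetric] sum_distrib_left[symmetric] power2_eq_square)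
  finally show ?thesis by simp
qed

lemma adjF_sym: "adjF F x y = adjF F y x" by (simp add: adjF_def insert_commute)

lemma adjF_01: "adjF F x y = 0 \<or> adjF F x y = 1" by (simp add: adjF_def)

lemma adjF_diag: "graph_on n F \<Longrightarrow> adjF F x x = 0"
  by (auto simp: adjF_def graph_on_def Kn_edges_def)

lemma adjF_row: "graph_on n F \<Longrightarrow> regular n F d \<Longrightarrow> a < n \<Longrightarrow> (\<Sum>c<n. adjF F a c) = real d"
  using regular_sum[of n F d a] by (simp add: adjF_def)

lemma sum_minus2:
  fixes h :: "'a \<Rightarrow> real"
  assumes "finite U" "a \<in> U" "b \<in> U" "a \<noteq> b"
  shows "(\<Sum>c\<in>U-{a}-{b}. h c) = (\<Sum>c\<in>U. h c) - h a - h b"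
proof -
  have "(\<Sum>c\<in>U-{a}-{b}. h c) = (\<Sum>c\<in>U-{a}. h c) - h b" using assms by (simp add: sum_diff1)
  also have "(\<Sum>c\<in>U-{a}. h c) = (\<Sum>c\<in>U. h c) - h a" using assms by (simp add: sum_diff1)
  finally show ?thesis .
qed

lemma ind_ge_sq:
  fixes y :: real
  assumes "\<bar>y\<bar> \<le> 2"
  shows "(if y \<noteq> 0 then 1 else 0) \<ge> y^2 / 4"
proof (cases "y = 0")
  case False
  have "y^2 = \<bar>y\<bar>^2" by simp
  also have "\<dots> \<le> 2^2" by (rule power_mono[OF assms]) simp
  finally show ?thesis using False by simp
qed simp

lemma TF_lower:
  assumes G: "graph_on n F" and R: "regular n F d" and n2: "2 \<le> n"
  shows "TF n F \<ge> real n * (real n - 2) * real d * (real n - 1 - real d)"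
proof -
  let ?U = "{..<n}"
  let ?ph = "\<lambda>a b c. adjF F a c - adjF F b c"
  have fin: "finite ?U" by simp
  have phb: "\<bar>?ph a b c - ?ph a b e\<bar> \<le> 2" for a b c e
    using adjF_01[of F a c] adjF_01[of F b c] adjF_01[of F a e] adjF_01[of F b e] by auto
  have "TF n F = (\<Sum>a\<in>?U. \<Sum>b\<in>?U-{a}. \<Sum>c\<in>?U-{a}-{b}. \<Sum>e\<in>?U-{a}-{b}-{c}.
        if ?ph a b c - ?ph a b e \<noteq> 0 then 1 else 0)"
    unfolding TF_def by (simp add: sum_dlists_4 phiF_def algebra_simps)
  also have "\<dots> \<ge> (\<Sum>a\<in>?U. \<Sum>b\<in>?U-{a}. \<Sum>c\<in>?U-{a}-{b}. \<Sum>e\<in>?U-{a}-{b}-{c}. (?ph a b c - ?ph a b e)^2 / 4)"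
    by (intro sum_mono ind_ge_sq phb)
  also have "(\<Sum>a\<in>?U. \<Sum>b\<in>?U-{a}. \<Sum>c\<in>?U-{a}-{b}. \<Sum>e\<in>?U-{a}-{b}-{c}. (?ph a b c - ?ph a b e)^2 / 4)
      = (\<Sum>a\<in>?U. \<Sum>b\<in>?U-{a}. (real n - 2) / 2 * (\<Sum>c\<in>?U-{a}-{b}. (?ph a b c)^2))"
  proof (rule sum.cong[OF refl], rule sum.cong[OF refl])
    fix a b assume a: "a \<in> ?U" and b: "b \<in> ?U - {a}"
    have abU: "a \<in> ?U" "b \<in> ?U" "a \<noteq> b" using a b by auto
    let ?W = "?U - {a} - {b}"
    have cW: "card ?W = n - 2" using a b by (simp add: card_Diff_singleton_if)
    have cWr: "real (card ?W) = real n - 2" using cW n2 by simp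
    have s0: "(\<Sum>c\<in>?W. ?ph a b c) = 0"
    proof -
      have "(\<Sum>c\<in>?W. adjF F a c) = (\<Sum>c\<in>?U. adjF F a c) - adjF F a a - adjF F a b"
        by (rule sum_minus2[OF fin abU])
      moreover have "(\<Sum>c\<in>?W. adjF F b c) = (\<Sum>c\<in>?U. adjF F b c) - adjF F b a - adjF F b b"
        by (rule sum_minus2[OF fin abU])
      moreover have "a < n" "b < n" using abU by auto
      ultimately show ?thesis using adjF_row[OF G R] adjF_diag[OF G] adjF_sym[of F a b]
        by (simp add: sum_subtractf)
    qed
    have "(\<Sum>c\<in>?W. \<Sum>e\<in>?W-{c}. (?ph a b c - ?ph a b e)^2 / 4) = (\<Sum>c\<in>?W. \<Sum>e\<in>?W. (?ph a b c - ?ph a b e)^2 / 4)"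
    proof (rule sum.cong[OF refl])
      fix c assume "c \<in> ?W"
      then show "(\<Sum>e\<in>?W-{c}. (?ph a b c - ?ph a b e)^2 / 4) = (\<Sum>e\<in>?W. (?ph a b c - ?ph a b e)^2 / 4)"
        by (simp add: sum_diff1)
    qed
    also have "\<dots> = (\<Sum>c\<in>?W. \<Sum>e\<in>?W. (?ph a b c - ?ph a b e)^2) / 4"
      by (simp add: sum_divide_distrib)
    also have "\<dots> = (real n - 2) / 2 * (\<Sum>c\<in>?W. (?ph a b c)^2)"
      using sq_diff_sum[of ?W "?ph a b"] s0 cWr by simp
    finally show "(\<Sum>c\<in>?W. \<Sum>e\<in>?U-{a}-{b}-{c}. (?ph a b c - ?ph a b e)^2 / 4) = (real n - 2) / 2 * (\<Sum>c\<in>?W. (?ph a b c)^2)" .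
  qed
  also have "\<dots> = (real n - 2) / 2 * (\<Sum>a\<in>?U. \<Sum>b\<in>?U-{a}. \<Sum>c\<in>?U-{a}-{b}. (?ph a b c)^2)"
    by (simp add: sum_distrib_left)
  also have "(\<Sum>a\<in>?U. \<Sum>b\<in>?U-{a}. \<Sum>c\<in>?U-{a}-{b}. (?ph a b c)^2) = 2 * real n * real d * (real n - 1 - real d)"
  proof -
    have inner: "(\<Sum>c\<in>?U-{a}-{b}. (?ph a b c)^2) = (\<Sum>c\<in>?U. (?ph a b c)^2) - 2 * adjF F a b"
      if a: "a \<in> ?U" and b: "b \<in> ?U - {a}" for a b
    proof -
      have "(\<Sum>c\<in>?U-{a}-{b}. (?ph a b c)^2) = (\<Sum>c\<in>?U. (?ph a b c)^2) - (?ph a b a)^2 - (?ph a b b)^2"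
        by (rule sum_minus2) (use a b in auto)
      moreover have "(?ph a b a)^2 = adjF F a b" "(?ph a b b)^2 = adjF F a b"
        using adjF_diag[OF G, of a] adjF_diag[OF G, of b] adjF_01[of F a b] adjF_sym[of F a b]
        by (auto simp: power2_eq_square)
      ultimately show ?thesis by simp
    qed
    have mid: "(\<Sum>b\<in>?U-{a}. \<Sum>c\<in>?U-{a}-{b}. (?ph a b c)^2) = (\<Sum>b\<in>?U. \<Sum>c\<in>?U. (?ph a b c)^2) - 2 * real d"
      if a: "a \<in> ?U" for a
    proof -
      have "(\<Sum>b\<in>?U-{a}. \<Sum>c\<in>?U-{a}-{b}. (?ph a b c)^2) = (\<Sum>b\<in>?U-{a}. (\<Sum>c\<in>?U. (?ph a b c)^2) - 2 * adjF F a b)"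
        by (rule sum.cong[OF refl]) (rule inner[OF a])
      also have "\<dots> = (\<Sum>b\<in>?U. (\<Sum>c\<in>?U. (?ph a b c)^2) - 2 * adjF F a b) - ((\<Sum>c\<in>?U. (?ph a a c)^2) - 2 * adjF F a a)"
        using a by (simp add: sum_diff1)
      also have "\<dots> = (\<Sum>b\<in>?U. \<Sum>c\<in>?U. (?ph a b c)^2) - 2 * real d"
        using adjF_row[OF G R, of a] a adjF_diag[OF G, of a] by (simp add: sum_subtractf sum_distrib_left[symmetric])
      finally show ?thesis .
    qed
    have colsum: "(\<Sum>a\<in>?U. adjF F a c) = real d" if c: "c \<in> ?U" for c
      using adjF_row[OF G R, of c] c by (simp add: adjF_sym)
    have colsq: "(\<Sum>a\<in>?U. (adjF F a c)^2) = real d" if c: "c \<in> ?U" for c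
    proof -
      have "(adjF F a c)^2 = adjF F a c" for a using adjF_01[of F a c] by auto
      then show ?thesis using colsum[OF c] by simp
    qed
    have "(\<Sum>a\<in>?U. \<Sum>b\<in>?U-{a}. \<Sum>c\<in>?U-{a}-{b}. (?ph a b c)^2) = (\<Sum>a\<in>?U. (\<Sum>b\<in>?U. \<Sum>c\<in>?U. (?ph a b c)^2) - 2 * real d)"
      by (rule sum.cong[OF refl]) (rule mid)
    also have "\<dots> = (\<Sum>a\<in>?U. \<Sum>b\<in>?U. \<Sum>c\<in>?U. (?ph a b c)^2) - 2 * real n * real d"
      by (simp add: sum_subtractf)
    also have "(\<Sum>a\<in>?U. \<Sum>b\<in>?U. \<Sum>c\<in>?U. (?ph a b c)^2) = (\<Sum>c\<in>?U. \<Sum>a\<in>?U. \<Sum>b\<in>?U. (adjF F a c - adjF F b c)^2)"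
      by (rule trans[OF swap_inner3 swap_inner3])
    also have "\<dots> = (\<Sum>c\<in>?U. 2 * real n * real d - 2 * (real d)^2)"
    proof (rule sum.cong[OF refl])
      fix c assume c: "c \<in> ?U"
      show "(\<Sum>a\<in>?U. \<Sum>b\<in>?U. (adjF F a c - adjF F b c)^2) = 2 * real n * real d - 2 * (real d)^2"
        using sq_diff_sum[of ?U "\<lambda>a. adjF F a c"] colsum[OF c] colsq[OF c] by simp
    qed
    also have "\<dots> = real n * (2 * real n * real d - 2 * (real d)^2)" by simp
    finally show ?thesis by (simp add: power2_eq_square algebra_simps)
  qed
  finally have "TF n F \<ge> (real n - 2) / 2 * (2 * real n * real d * (real n - 1 - real d))" .
  moreover have "(real n - 2) / 2 * (2 * real n * real d * (real n - 1 - real d)) = real n * (real n - 2) * real d * (real n - 1 - real d)"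
    by (simp add: field_simps)
  ultimately show ?thesis by (simp only:)
qed

definition Rd :: "nat \<Rightarrow> (nat set \<Rightarrow> int) \<Rightarrow> nat \<Rightarrow> real" where
  "Rd n f c = real (card {a\<in>{..<n}. a \<noteq> c \<and> f {a, c} = 1})"

definition Bd :: "nat \<Rightarrow> (nat set \<Rightarrow> int) \<Rightarrow> nat \<Rightarrow> real" where
  "Bd n f c = real (card {a\<in>{..<n}. a \<noteq> c \<and> f {a, c} = -1})"

definition wv :: "(nat set \<Rightarrow> int) \<Rightarrow> nat \<Rightarrow> nat \<Rightarrow> nat \<Rightarrow> int" where
  "wv f a b c = f {a, c} - f {b, c}"

definition Zc :: "nat \<Rightarrow> (nat set \<Rightarrow> int) \<Rightarrow> nat \<Rightarrow> nat \<Rightarrow> real" where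
  "Zc n f a b = real (card {c\<in>{..<n} - {a} - {b}. wv f a b c = 0})"
definition Pc :: "nat \<Rightarrow> (nat set \<Rightarrow> int) \<Rightarrow> nat \<Rightarrow> nat \<Rightarrow> real" where
  "Pc n f a b = real (card {c\<in>{..<n} - {a} - {b}. wv f a b c = 2})"
definition Mc :: "nat \<Rightarrow> (nat set \<Rightarrow> int) \<Rightarrow> nat \<Rightarrow> nat \<Rightarrow> real" where
  "Mc n f a b = real (card {c\<in>{..<n} - {a} - {b}. wv f a b c = -2})"

definition tau :: "nat \<Rightarrow> (nat set \<Rightarrow> int) \<Rightarrow> nat \<Rightarrow> nat \<Rightarrow> real" where
  "tau n f a b = Zc n f a b * Pc n f a b + Zc n f a b * Mc n f a b + Pc n f a b * Mc n f a b"

locale fcol =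
  fixes n :: nat and f :: "nat set \<Rightarrow> int"
  assumes fpm: "\<forall>e\<in>Kn_edges n. f e = 1 \<or> f e = -1"
begin

lemma fpm2: "a < n \<Longrightarrow> c < n \<Longrightarrow> a \<noteq> c \<Longrightarrow> f {a, c} = 1 \<or> f {a, c} = -1"
  using fpm by (simp add: Kn_mem)

lemma wv_cases:
  assumes "a < n" "b < n" "c < n" "c \<noteq> a" "c \<noteq> b"
  shows "wv f a b c = 0 \<or> wv f a b c = 2 \<or> wv f a b c = -2"
  using fpm2[of a c] fpm2[of b c] assms by (auto simp: wv_def)

lemma sum_ind_card:
  assumes "finite A"
  shows "(\<Sum>x\<in>A. if P x then 1 else (0::real)) = real (card {x\<in>A. P x})"
  using sum.inter_filter[OF assms, of "\<lambda>_. (1::real)" P] by simp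

lemma card_split3:
  assumes ab: "a < n" "b < n"
  shows "Zc n f a b + Pc n f a b + Mc n f a b = real (card ({..<n} - {a} - {b}))"
proof -
  define W where "W = {..<n} - {a} - {b}"
  define Z where "Z = {c\<in>W. wv f a b c = 0}"
  define P where "P = {c\<in>W. wv f a b c = 2}"
  define M where "M = {c\<in>W. wv f a b c = -2}"
  have fW: "finite W" by (simp add: W_def)
  have W3: "W = Z \<union> P \<union> M" using wv_cases ab unfolding W_def Z_def P_def M_def by auto
  have d1: "Z \<inter> P = {}" "(Z \<union> P) \<inter> M = {}" unfolding Z_def P_def M_def by auto
  have fs: "finite Z" "finite P" "finite M" using fW unfolding Z_def P_def M_def by auto
  have "card W = card Z + card P + card M"
    unfolding W3 using d1 fs by (simp add: card_Un_disjoint)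
  moreover have "Zc n f a b = real (card Z)" "Pc n f a b = real (card P)" "Mc n f a b = real (card M)"
    unfolding Zc_def Pc_def Mc_def Z_def P_def M_def W_def by simp_all
  ultimately show ?thesis unfolding W_def by simp
qed

lemma altf_wv: "altf f [a, b, c, e] = real_of_int (wv f a b c) - real_of_int (wv f a b e)"
  by (simp add: altf_def wv_def)

lemma inner_count:
  assumes ab: "a < n" "b < n"
  shows "(\<Sum>c\<in>{..<n}-{a}-{b}. \<Sum>e\<in>{..<n}-{a}-{b}-{c}. if altf f [a,b,c,e] \<noteq> 0 then 1 else 0) = 2 * tau n f a b"
proof -
  define W where "W = {..<n} - {a} - {b}"
  define Z where "Z = {c\<in>W. wv f a b c = 0}"
  define P where "P = {c\<in>W. wv f a b c = 2}"
  define M where "M = {c\<in>W. wv f a b c = -2}"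
  have fW: "finite W" by (simp add: W_def)
  have W3: "W = Z \<union> P \<union> M" using wv_cases ab unfolding W_def Z_def P_def M_def by auto
  have fs: "finite Z" "finite P" "finite M" using fW unfolding Z_def P_def M_def by auto
  have zc: "Zc n f a b = real (card Z)" "Pc n f a b = real (card P)" "Mc n f a b = real (card M)"
    unfolding Zc_def Pc_def Mc_def Z_def P_def M_def W_def by simp_all
  have each: "(\<Sum>e\<in>W-{c}. if altf f [a,b,c,e] \<noteq> 0 then 1 else (0::real)) = real (card {e\<in>W. wv f a b e \<noteq> wv f a b c})"
    if c: "c \<in> W" for c
  proof -
    have "(\<Sum>e\<in>W-{c}. if altf f [a,b,c,e] \<noteq> 0 then 1 else (0::real)) = (\<Sum>e\<in>W-{c}. if wv f a b e \<noteq> wv f a b c then 1 else 0)"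
      by (rule sum.cong[OF refl]) (auto simp: altf_wv)
    also have "\<dots> = (\<Sum>e\<in>W. if wv f a b e \<noteq> wv f a b c then 1 else 0)"
      using c fW by (simp add: sum_diff1)
    also have "\<dots> = real (card {e\<in>W. wv f a b e \<noteq> wv f a b c})"
      by (rule sum_ind_card[OF fW])
    finally show ?thesis .
  qed
  have cnt: "real (card {e\<in>W. wv f a b e \<noteq> wv f a b c}) =
      (if wv f a b c = 0 then real (card P) + real (card M) else if wv f a b c = 2 then real (card Z) + real (card M) else real (card Z) + real (card P))"
    if c: "c \<in> W" for c
  proof -
    have cs: "wv f a b c = 0 \<or> wv f a b c = 2 \<or> wv f a b c = -2" using wv_cases c ab unfolding W_def by auto
    have W3': "e \<in> W \<Longrightarrow> wv f a b e = 0 \<or> wv f a b e = 2 \<or> wv f a b e = -2" for e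
      using wv_cases ab unfolding W_def by auto
    show ?thesis
    proof (cases "wv f a b c = 0")
      case True
      then have "{e\<in>W. wv f a b e \<noteq> wv f a b c} = P \<union> M" using W3' unfolding P_def M_def by auto
      moreover have "P \<inter> M = {}" unfolding P_def M_def by auto
      ultimately show ?thesis using True fs by (simp add: card_Un_disjoint)
    next
      case F1: False
      show ?thesis
      proof (cases "wv f a b c = 2")
        case True
        then have "{e\<in>W. wv f a b e \<noteq> wv f a b c} = Z \<union> M" using W3' unfolding Z_def M_def by auto
        moreover have "Z \<inter> M = {}" unfolding Z_def M_def by auto
        ultimately show ?thesis using True F1 fs by (simp add: card_Un_disjoint)
      next
        case False
        then have m2: "wv f a b c = -2" using cs F1 by auto
        then have "{e\<in>W. wv f a b e \<noteq> wv f a b c} = Z \<union> P" using W3' unfolding Z_def P_def by auto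
        moreover have "Z \<inter> P = {}" unfolding Z_def P_def by auto
        ultimately show ?thesis using m2 fs by (simp add: card_Un_disjoint)
      qed
    qed
  qed
  let ?h = "\<lambda>c. (if wv f a b c = 0 then real (card P) + real (card M) else if wv f a b c = 2 then real (card Z) + real (card M) else real (card Z) + real (card P))"
  have "(\<Sum>c\<in>W. \<Sum>e\<in>W-{c}. if altf f [a,b,c,e] \<noteq> 0 then 1 else (0::real)) = (\<Sum>c\<in>W. ?h c)"
    by (rule sum.cong[OF refl]) (simp add: each cnt)
  also have "\<dots> = (\<Sum>c\<in>Z. ?h c) + (\<Sum>c\<in>P. ?h c) + (\<Sum>c\<in>M. ?h c)"
  proof -
    have d1: "Z \<inter> P = {}" "(Z \<union> P) \<inter> M = {}" unfolding Z_def P_def M_def by auto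
    show ?thesis unfolding W3 using d1 fs by (simp add: sum.union_disjoint)
  qed
  also have "(\<Sum>c\<in>Z. ?h c) = real (card Z) * (real (card P) + real (card M))"
    by (simp add: Z_def)
  also have "(\<Sum>c\<in>P. ?h c) = real (card P) * (real (card Z) + real (card M))"
    by (simp add: P_def)
  also have "(\<Sum>c\<in>M. ?h c) = real (card M) * (real (card Z) + real (card P))"
    by (simp add: M_def)
  finally have "(\<Sum>c\<in>W. \<Sum>e\<in>W-{c}. if altf f [a,b,c,e] \<noteq> 0 then 1 else (0::real)) = 2 * tau n f a b"
    unfolding tau_def zc by (simp add: algebra_simps)
  then show ?thesis unfolding W_def .
qed

end

lemma pair_ineq:
  fixes Z P M m :: real
  assumes "Z \<ge> 0" "P \<ge> 0" "M \<ge> 0" "Z + P + M = m" "m > 0"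
  shows "P * m \<le> 2 * (Z * P + Z * M + P * M) \<or> (Z + M) * m \<le> 2 * (Z * P + Z * M + P * M)"
proof (cases "Z + M \<ge> m / 2")
  case True
  have "P * m \<le> P * (2 * (Z + M))" using True assms by (intro mult_left_mono) auto
  also have "\<dots> \<le> 2 * (Z * P + Z * M + P * M)" using assms by (simp add: algebra_simps)
  finally show ?thesis by simp
next
  case False
  then have "P \<ge> m / 2" using assms by linarith
  then have "(Z + M) * m \<le> (Z + M) * (2 * P)" using assms by (intro mult_left_mono) auto
  also have "\<dots> \<le> 2 * (Z * P + Z * M + P * M)" using assms by (simp add: algebra_simps)
  finally show ?thesis by simp
qed

context fcol
begin

lemma RB_sum: "c < n \<Longrightarrow> Rd n f c + Bd n f c = real n - 1"
proof -
  assume c: "c < n"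
  have "{a\<in>{..<n}. a \<noteq> c} = {a\<in>{..<n}. a \<noteq> c \<and> f {a, c} = 1} \<union> {a\<in>{..<n}. a \<noteq> c \<and> f {a, c} = -1}"
    using fpm2 c by auto
  moreover have "card ({a\<in>{..<n}. a \<noteq> c \<and> f {a, c} = 1} \<union> {a\<in>{..<n}. a \<noteq> c \<and> f {a, c} = -1})
      = card {a\<in>{..<n}. a \<noteq> c \<and> f {a, c} = 1} + card {a\<in>{..<n}. a \<noteq> c \<and> f {a, c} = -1}"
    by (rule card_Un_disjoint) auto
  moreover have "{a\<in>{..<n}. a \<noteq> c} = {..<n} - {c}" by auto
  ultimately show ?thesis using c by (simp add: Rd_def Bd_def)
qed

lemma Tf_tau: "Tf n f = (\<Sum>a<n. \<Sum>b\<in>{..<n}-{a}. 2 * tau n f a b)"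
proof -
  have "Tf n f = (\<Sum>a\<in>{..<n}. \<Sum>b\<in>{..<n}-{a}. \<Sum>c\<in>{..<n}-{a}-{b}. \<Sum>e\<in>{..<n}-{a}-{b}-{c}.
                    if altf f [a,b,c,e] \<noteq> 0 then 1 else 0)"
    unfolding Tf_def by (rule sum_dlists_4) simp
  also have "\<dots> = (\<Sum>a<n. \<Sum>b\<in>{..<n}-{a}. 2 * tau n f a b)"
    by (rule sum.cong[OF refl], rule sum.cong[OF refl]) (simp add: inner_count)
  finally show ?thesis .
qed

lemma Pc_alt: "a < n \<Longrightarrow> b < n \<Longrightarrow> Pc n f a b = (\<Sum>c<n. if c \<noteq> a \<and> c \<noteq> b \<and> f {a,c} = 1 \<and> f {b,c} = -1 then 1 else 0)"
proof -
  assume ab: "a < n" "b < n"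
  have "{c\<in>{..<n} - {a} - {b}. wv f a b c = 2} = {c\<in>{..<n}. c \<noteq> a \<and> c \<noteq> b \<and> f {a,c} = 1 \<and> f {b,c} = -1}"
  proof (rule set_eqI)
    fix x
    show "x \<in> {c\<in>{..<n} - {a} - {b}. wv f a b c = 2} \<longleftrightarrow> x \<in> {c\<in>{..<n}. c \<noteq> a \<and> c \<noteq> b \<and> f {a,c} = 1 \<and> f {b,c} = -1}"
    proof (cases "x < n \<and> x \<noteq> a \<and> x \<noteq> b")
      case True
      then have "f {a,x} = 1 \<or> f {a,x} = -1" "f {b,x} = 1 \<or> f {b,x} = -1" using fpm2 ab by auto
      then show ?thesis using True by (auto simp: wv_def)
    next
      case False then show ?thesis by auto
    qed
  qed
  then show ?thesis unfolding Pc_def by (simp add: sum_ind_card)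
qed

lemma sum_RB: "(\<Sum>c<n. Rd n f c * Bd n f c) = (\<Sum>a<n. \<Sum>b\<in>{..<n}-{a}. Pc n f a b)"
proof -
  let ?I = "\<lambda>a b c. if c \<noteq> a \<and> c \<noteq> b \<and> f {a,c} = 1 \<and> f {b,c} = -1 then 1 else (0::real)"
  have "(\<Sum>a<n. \<Sum>b\<in>{..<n}-{a}. Pc n f a b) = (\<Sum>a<n. \<Sum>b\<in>{..<n}-{a}. \<Sum>c<n. ?I a b c)"
    by (rule sum.cong[OF refl], rule sum.cong[OF refl]) (simp add: Pc_alt)
  also have "\<dots> = (\<Sum>a<n. \<Sum>b<n. \<Sum>c<n. ?I a b c)"
  proof (rule sum.cong[OF refl])
    fix a assume a: "a \<in> {..<n}"
    have "(\<Sum>b\<in>{..<n}-{a}. \<Sum>c<n. ?I a b c) = (\<Sum>b<n. \<Sum>c<n. ?I a b c) - (\<Sum>c<n. ?I a a c)"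
      using a by (simp add: sum_diff1)
    moreover have "(\<Sum>c<n. ?I a a c) = 0" by (rule sum.neutral) auto
    ultimately show "(\<Sum>b\<in>{..<n}-{a}. \<Sum>c<n. ?I a b c) = (\<Sum>b<n. \<Sum>c<n. ?I a b c)" by simp
  qed
  also have "\<dots> = (\<Sum>c<n. \<Sum>a<n. \<Sum>b<n. ?I a b c)"
    by (rule trans[OF swap_inner3 swap_inner3])
  also have "\<dots> = (\<Sum>c<n. Rd n f c * Bd n f c)"
  proof (rule sum.cong[OF refl])
    fix c assume c: "c \<in> {..<n}"
    have "(\<Sum>a<n. \<Sum>b<n. ?I a b c) = (\<Sum>a<n. \<Sum>b<n. (if a \<noteq> c \<and> f {a,c} = 1 then 1 else 0) * (if b \<noteq> c \<and> f {b,c} = -1 then 1 else (0::real)))"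
      by (intro sum.cong refl) auto
    also have "\<dots> = (\<Sum>a<n. if a \<noteq> c \<and> f {a,c} = 1 then 1 else (0::real)) * (\<Sum>b<n. if b \<noteq> c \<and> f {b,c} = -1 then 1 else (0::real))"
      by (simp add: sum_product)
    also have "\<dots> = Rd n f c * Bd n f c"
      unfolding Rd_def Bd_def by (simp add: sum_ind_card)
    finally show "(\<Sum>a<n. \<Sum>b<n. ?I a b c) = Rd n f c * Bd n f c" .
  qed
  finally show ?thesis by simp
qed

end

context fcol
begin

lemma Bd_le:
  assumes ab: "a < n" "b < n" "a \<noteq> b"
  shows "Bd n f a \<le> Zc n f a b + Mc n f a b + 1"
proof -
  define W where "W = {..<n} - {a} - {b}"
  define Z where "Z = {c\<in>W. wv f a b c = 0}"
  define M where "M = {c\<in>W. wv f a b c = -2}"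
  have sub: "{c\<in>{..<n}. c \<noteq> a \<and> f {c, a} = -1} \<subseteq> insert b (Z \<union> M)"
  proof
    fix c assume c: "c \<in> {c\<in>{..<n}. c \<noteq> a \<and> f {c, a} = -1}"
    show "c \<in> insert b (Z \<union> M)"
    proof (cases "c = b")
      case False
      then have "f {b,c} = 1 \<or> f {b,c} = -1" using fpm2[of b c] c ab by auto
      moreover have "f {a,c} = -1" using c by (simp add: insert_commute)
      ultimately show ?thesis using c False unfolding Z_def M_def W_def by (auto simp: wv_def)
    qed simp
  qed
  have fZM: "finite (Z \<union> M)" by (simp add: Z_def M_def W_def)
  have "card {c\<in>{..<n}. c \<noteq> a \<and> f {c, a} = -1} \<le> card (insert b (Z \<union> M))"
    by (rule card_mono[OF _ sub]) (use fZM in simp)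
  also have "\<dots> \<le> card (Z \<union> M) + 1" using fZM by (simp add: card_insert_if)
  also have "\<dots> \<le> card Z + card M + 1" using card_Un_le[of Z M] by simp
  finally have "real (card {c\<in>{..<n}. c \<noteq> a \<and> f {c, a} = -1}) \<le> real (card Z) + real (card M) + 1"
    by linarith
  then show ?thesis unfolding Bd_def Zc_def Mc_def Z_def M_def W_def .
qed

lemma Rd_le:
  assumes ab: "a < n" "b < n" "a \<noteq> b"
  shows "Rd n f b \<le> Zc n f a b + Mc n f a b + 1"
proof -
  define W where "W = {..<n} - {a} - {b}"
  define Z where "Z = {c\<in>W. wv f a b c = 0}"
  define M where "M = {c\<in>W. wv f a b c = -2}"
  have sub: "{c\<in>{..<n}. c \<noteq> b \<and> f {c, b} = 1} \<subseteq> insert a (Z \<union> M)"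
  proof
    fix c assume c: "c \<in> {c\<in>{..<n}. c \<noteq> b \<and> f {c, b} = 1}"
    show "c \<in> insert a (Z \<union> M)"
    proof (cases "c = a")
      case False
      then have "f {a,c} = 1 \<or> f {a,c} = -1" using fpm2[of a c] c ab by auto
      moreover have "f {b,c} = 1" using c by (simp add: insert_commute)
      ultimately show ?thesis using c False unfolding Z_def M_def W_def by (auto simp: wv_def)
    qed simp
  qed
  have fZM: "finite (Z \<union> M)" by (simp add: Z_def M_def W_def)
  have "card {c\<in>{..<n}. c \<noteq> b \<and> f {c, b} = 1} \<le> card (insert a (Z \<union> M))"
    by (rule card_mono[OF _ sub]) (use fZM in simp)
  also have "\<dots> \<le> card (Z \<union> M) + 1" using fZM by (simp add: card_insert_if)
  also have "\<dots> \<le> card Z + card M + 1" using card_Un_le[of Z M] by simp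
  finally have "real (card {c\<in>{..<n}. c \<noteq> b \<and> f {c, b} = 1}) \<le> real (card Z) + real (card M) + 1"
    by linarith
  then show ?thesis unfolding Rd_def Zc_def Mc_def Z_def M_def W_def .
qed

lemma ZPM_nonneg: "Zc n f a b \<ge> 0" "Pc n f a b \<ge> 0" "Mc n f a b \<ge> 0"
  by (simp_all add: Zc_def Pc_def Mc_def)

lemma tau_nonneg: "tau n f a b \<ge> 0"
  using ZPM_nonneg[of a b] by (simp add: tau_def)

lemma pair_bound:
  assumes ab: "a < n" "b < n" "a \<noteq> b" and n3: "3 \<le> n" and th: "\<theta> > 0"
    and t0: "2 * \<theta> / (real n - 2) + 1 \<le> t0"
  shows "Pc n f a b \<le> 2 * tau n f a b / (real n - 2) + (real n - 2) * tau n f a b / \<theta>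
           + (if Bd n f a \<le> t0 \<and> Rd n f b \<le> t0 then real n - 2 else 0)"
proof -
  define m where "m = real n - 2"
  have m0: "m > 0" using n3 by (simp add: m_def)
  let ?Z = "Zc n f a b" and ?P = "Pc n f a b" and ?M = "Mc n f a b" and ?t = "tau n f a b"
  have cW: "card ({..<n} - {a} - {b}) = n - 2" using ab by (simp add: card_Diff_singleton_if)
  have sum3: "?Z + ?P + ?M = m" using card_split3[OF ab(1,2)] cW n3 by (simp add: m_def)
  have nn: "?Z \<ge> 0" "?P \<ge> 0" "?M \<ge> 0" "?t \<ge> 0" using ZPM_nonneg tau_nonneg by auto
  have Pm: "?P \<le> m" using sum3 nn by linarith
  have t1: "0 \<le> m * ?t / \<theta>" using m0 nn th by simp
  have t2: "0 \<le> 2 * ?t / m" using m0 nn by simp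
  have ind0: "0 \<le> (if Bd n f a \<le> t0 \<and> Rd n f b \<le> t0 then m else 0)" using m0 by simp
  from pair_ineq[OF nn(1-3) sum3 m0]
  have "?P \<le> 2 * ?t / m + m * ?t / \<theta> + (if Bd n f a \<le> t0 \<and> Rd n f b \<le> t0 then m else 0)"
  proof
    assume "?P * m \<le> 2 * (?Z * ?P + ?Z * ?M + ?P * ?M)"
    then have "?P \<le> 2 * ?t / m" using m0 by (simp add: tau_def pos_le_divide_eq)
    then show ?thesis using t1 ind0 by linarith
  next
    assume zm: "(?Z + ?M) * m \<le> 2 * (?Z * ?P + ?Z * ?M + ?P * ?M)"
    show ?thesis
    proof (cases "?t > \<theta>")
      case True
      then have "m \<le> m * ?t / \<theta>" using th m0 by (simp add: pos_le_divide_eq)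
      then show ?thesis using Pm t2 ind0 by linarith
    next
      case False
      then have "(?Z + ?M) * m \<le> 2 * \<theta>" using zm by (simp add: tau_def)
      then have "?Z + ?M \<le> 2 * \<theta> / m" using m0 by (simp add: pos_le_divide_eq)
      then have "Bd n f a \<le> t0" "Rd n f b \<le> t0"
        using Bd_le[OF ab] Rd_le[OF ab] t0 unfolding m_def by linarith+
      then show ?thesis using Pm t1 t2 by simp
    qed
  qed
  then show ?thesis unfolding m_def .
qed

lemma RB_disjoint:
  assumes "2 * t0 < real n - 1"
  shows "{v\<in>{..<n}. Bd n f v \<le> t0} \<inter> {w\<in>{..<n}. Rd n f w \<le> t0} = {}"
  using RB_sum assms by force

lemma RB_prod:
  assumes t: "2 * t0 < real n - 1" and t0: "t0 \<ge> 0"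
  shows "real (card {v\<in>{..<n}. Bd n f v \<le> t0}) * real (card {w\<in>{..<n}. Rd n f w \<le> t0}) \<le> t0 * real n"
proof -
  define Red where "Red = {v\<in>{..<n}. Bd n f v \<le> t0}"
  define Blue where "Blue = {w\<in>{..<n}. Rd n f w \<le> t0}"
  have disj: "Red \<inter> Blue = {}" using RB_disjoint[OF t] unfolding Red_def Blue_def .
  have fin: "finite Red" "finite Blue" unfolding Red_def Blue_def by auto
  have "real (card Red) * real (card Blue) = (\<Sum>v\<in>Red. \<Sum>w\<in>Blue. 1)" by simp
  also have "\<dots> \<le> (\<Sum>v\<in>Red. \<Sum>w\<in>Blue. (if f {w,v} = 1 then 1 else 0) + (if f {v,w} = -1 then 1 else (0::real)))"
  proof (intro sum_mono)
    fix v w assume v: "v \<in> Red" and w: "w \<in> Blue"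
    then have "v \<noteq> w" "v < n" "w < n" using disj unfolding Red_def Blue_def by auto
    then have "f {v,w} = 1 \<or> f {v,w} = -1" using fpm2 by auto
    then show "1 \<le> (if f {w,v} = 1 then 1 else 0) + (if f {v,w} = -1 then 1 else (0::real))"
      by (auto simp: insert_commute)
  qed
  also have "\<dots> = (\<Sum>w\<in>Blue. \<Sum>v\<in>Red. if f {w,v} = 1 then 1 else (0::real)) + (\<Sum>v\<in>Red. \<Sum>w\<in>Blue. if f {v,w} = -1 then 1 else (0::real))"
    by (simp add: sum.distrib sum.swap[of _ Red])
  also have "\<dots> \<le> (\<Sum>w\<in>Blue. Rd n f w) + (\<Sum>v\<in>Red. Bd n f v)"
  proof (rule add_mono)
  show "(\<Sum>w\<in>Blue. \<Sum>v\<in>Red. if f {w,v} = 1 then 1 else (0::real)) \<le> (\<Sum>w\<in>Blue. Rd n f w)"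
  proof (rule sum_mono)
    fix w assume w: "w \<in> Blue"
    have "(\<Sum>v\<in>Red. if f {w,v} = 1 then 1 else (0::real)) = real (card {v\<in>Red. f {w,v} = 1})"
      by (rule sum_ind_card[OF fin(1)])
    also have "\<dots> \<le> real (card {a\<in>{..<n}. a \<noteq> w \<and> f {a, w} = 1})"
      using w disj by (intro of_nat_mono card_mono) (auto simp: Red_def insert_commute)
    finally show "(\<Sum>v\<in>Red. if f {w,v} = 1 then 1 else (0::real)) \<le> Rd n f w" by (simp add: Rd_def)
  qed
  show "(\<Sum>v\<in>Red. \<Sum>w\<in>Blue. if f {v,w} = -1 then 1 else (0::real)) \<le> (\<Sum>v\<in>Red. Bd n f v)"
  proof (rule sum_mono)
    fix v assume v: "v \<in> Red"
    have "(\<Sum>w\<in>Blue. if f {v,w} = -1 then 1 else (0::real)) = real (card {w\<in>Blue. f {v,w} = -1})"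
      by (rule sum_ind_card[OF fin(2)])
    also have "\<dots> \<le> real (card {a\<in>{..<n}. a \<noteq> v \<and> f {a, v} = -1})"
      using v disj by (intro of_nat_mono card_mono) (auto simp: Blue_def insert_commute)
    finally show "(\<Sum>w\<in>Blue. if f {v,w} = -1 then 1 else (0::real)) \<le> Bd n f v" by (simp add: Bd_def)
  qed
  qed
  also have "\<dots> \<le> (\<Sum>w\<in>Blue. t0) + (\<Sum>v\<in>Red. t0)"
  proof (rule add_mono)
    show "(\<Sum>w\<in>Blue. Rd n f w) \<le> (\<Sum>w\<in>Blue. t0)" by (rule sum_mono) (simp add: Blue_def)
    show "(\<Sum>v\<in>Red. Bd n f v) \<le> (\<Sum>v\<in>Red. t0)" by (rule sum_mono) (simp add: Red_def)
  qed
  also have "\<dots> = t0 * real (card (Red \<union> Blue))"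
    using disj fin by (simp add: card_Un_disjoint algebra_simps)
  also have "\<dots> \<le> t0 * real n"
  proof -
    have "card (Red \<union> Blue) \<le> card {..<n}" by (rule card_mono) (auto simp: Red_def Blue_def)
    then show ?thesis using t0 by (intro mult_left_mono) auto
  qed
  finally show ?thesis unfolding Red_def Blue_def .
qed

end

lemma sideD:
  fixes R B :: "nat \<Rightarrow> real" and lp mu :: real
  assumes RB: "\<And>c. c < n \<Longrightarrow> R c + B c = real n - 1"
    and Rn: "\<And>c. c < n \<Longrightarrow> R c \<ge> 0" and Bn: "\<And>c. c < n \<Longrightarrow> B c \<ge> 0"
    and lp: "lp \<ge> 0" and n1: "n \<ge> 1"
    and ge: "card {c\<in>{..<n}. B c \<le> lp * real n} \<ge> card {c\<in>{..<n}. R c \<le> lp * real n}"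
    and prod: "real (card {c\<in>{..<n}. B c \<le> lp * real n}) * real (card {c\<in>{..<n}. R c \<le> lp * real n}) \<le> lp * real n * real n"
    and mix: "real (card {c\<in>{..<n}. \<not> B c \<le> lp * real n \<and> \<not> R c \<le> lp * real n}) \<le> mu * real n"
    and mu: "mu \<le> 1/2"
  shows "(\<Sum>c<n. B c) \<le> (5 * lp + mu) * (real n)^2"
proof -
  define Red where "Red = {c\<in>{..<n}. B c \<le> lp * real n}"
  define Blue where "Blue = {c\<in>{..<n}. R c \<le> lp * real n}"
  define Mix where "Mix = {c\<in>{..<n}. \<not> B c \<le> lp * real n \<and> \<not> R c \<le> lp * real n}"
  have fin: "finite Red" "finite Blue" "finite Mix" by (simp_all add: Red_def Blue_def Mix_def)
  have U: "{..<n} = Red \<union> Blue \<union> Mix" by (auto simp: Red_def Blue_def Mix_def)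
  have "n \<le> card Red + card Blue + card Mix"
  proof -
    have "n = card (Red \<union> Blue \<union> Mix)" using U by (metis card_lessThan)
    also have "\<dots> \<le> card (Red \<union> Blue) + card Mix" by (rule card_Un_le)
    also have "\<dots> \<le> card Red + card Blue + card Mix" using card_Un_le[of Red Blue] by simp
    finally show ?thesis .
  qed
  then have cn: "real n \<le> real (card Red) + real (card Blue) + real (card Mix)" by linarith
  have ge': "real (card Red) \<ge> real (card Blue)" using ge unfolding Red_def Blue_def by simp
  have mix': "real (card Mix) \<le> mu * real n" using mix unfolding Mix_def .
  have "mu * real n \<le> (1/2) * real n" using mult_right_mono[OF mu, of "real n"] by simp
  then have Rq: "real (card Red) \<ge> real n / 4" using cn ge' mix' by linarith
  have "real n \<ge> 1" using n1 by simp
  then have Rpos: "real (card Red) > 0" using Rq by linarith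
  have prod': "real (card Red) * real (card Blue) \<le> lp * real n * real n" using prod unfolding Red_def Blue_def .
  have Bq: "real (card Blue) \<le> 4 * lp * real n"
  proof -
    have "real (card Red) * real (card Blue) \<le> real (card Red) * (4 * lp * real n)"
    proof -
      have "lp * real n * real n = (real n / 4) * (4 * lp * real n)" by simp
      also have "\<dots> \<le> real (card Red) * (4 * lp * real n)" using Rq lp by (intro mult_right_mono) auto
      finally show ?thesis using prod' by linarith
    qed
    then show ?thesis using Rpos by (simp add: mult_le_cancel_left_pos)
  qed
  have fU: "finite {..<n}" by simp
  have RU: "Red \<subseteq> {..<n}" by (auto simp: Red_def)
  have cd: "real (card ({..<n} - Red)) \<le> 4 * lp * real n + mu * real n"
  proof -
    have "{..<n} - Red \<subseteq> Blue \<union> Mix" using U by auto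
    then have "card ({..<n} - Red) \<le> card (Blue \<union> Mix)" by (intro card_mono) (simp_all add: fin)
    also have "\<dots> \<le> card Blue + card Mix" by (rule card_Un_le)
    finally show ?thesis using Bq mix' by linarith
  qed
  have "(\<Sum>c<n. B c) = (\<Sum>c\<in>Red. B c) + (\<Sum>c\<in>{..<n} - Red. B c)"
    using sum.subset_diff[OF RU fU, of B] by simp
  also have "(\<Sum>c\<in>Red. B c) \<le> (\<Sum>c\<in>Red. lp * real n)" by (rule sum_mono) (simp add: Red_def)
  also have "(\<Sum>c\<in>{..<n} - Red. B c) \<le> (\<Sum>c\<in>{..<n} - Red. real n)"
  proof (rule sum_mono)
    fix c assume "c \<in> {..<n} - Red"
    then have "c < n" by simp
    then show "B c \<le> real n" using RB[of c] Rn[of c] by linarith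
  qed
  also have "(\<Sum>c\<in>Red. lp * real n) + (\<Sum>c\<in>{..<n} - Red. real n) = real (card Red) * (lp * real n) + real (card ({..<n} - Red)) * real n"
    by simp
  also have "\<dots> \<le> real n * (lp * real n) + (4 * lp * real n + mu * real n) * real n"
  proof (rule add_mono)
    have "card Red \<le> n" using card_mono[OF fU RU] by simp
    then show "real (card Red) * (lp * real n) \<le> real n * (lp * real n)" using lp by (intro mult_right_mono) auto
    show "real (card ({..<n} - Red)) * real n \<le> (4 * lp * real n + mu * real n) * real n"
      using cd by (intro mult_right_mono) auto
  qed
  also have "\<dots> = (5 * lp + mu) * (real n)^2" by (simp add: power2_eq_square algebra_simps)
  finally show ?thesis by simp
qed

context fcol
begin

lemma S_RB: "2 * Ssum n f = (\<Sum>a<n. Rd n f a - Bd n f a)"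
proof -
  have "2 * Ssum n f = (\<Sum>a\<in>{..<n}. \<Sum>b\<in>{..<n}-{a}. real_of_int (f {a,b}))"
    using sum_pairs_Kn[of "\<lambda>e. real_of_int (f e)" n] by (simp add: Ssum_def)
  also have "\<dots> = (\<Sum>a<n. Rd n f a - Bd n f a)"
  proof (rule sum.cong[OF refl])
    fix a assume a: "a \<in> {..<n}"
    have "(\<Sum>b\<in>{..<n}-{a}. real_of_int (f {a,b})) = (\<Sum>b\<in>{..<n}-{a}. (if f {b,a} = 1 then 1 else 0) - (if f {b,a} = -1 then 1 else (0::real)))"
    proof (rule sum.cong[OF refl])
      fix b assume "b \<in> {..<n} - {a}"
      then have "f {a,b} = 1 \<or> f {a,b} = -1" using fpm2[of a b] a by auto
      then show "real_of_int (f {a,b}) = (if f {b,a} = 1 then 1 else 0) - (if f {b,a} = -1 then 1 else (0::real))"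
        by (auto simp: insert_commute)
    qed
    also have "\<dots> = real (card {b\<in>{..<n}-{a}. f {b,a} = 1}) - real (card {b\<in>{..<n}-{a}. f {b,a} = -1})"
      by (simp add: sum_subtractf sum_ind_card)
    also have "{b\<in>{..<n}-{a}. f {b,a} = 1} = {b\<in>{..<n}. b \<noteq> a \<and> f {b,a} = 1}" by auto
    also have "{b\<in>{..<n}-{a}. f {b,a} = -1} = {b\<in>{..<n}. b \<noteq> a \<and> f {b,a} = -1}" by auto
    finally show "(\<Sum>b\<in>{..<n}-{a}. real_of_int (f {a,b})) = Rd n f a - Bd n f a" by (simp add: Rd_def Bd_def)
  qed
  finally show ?thesis .
qed

end

context fcol
begin

lemma RdBd_nonneg: "Rd n f c \<ge> 0" "Bd n f c \<ge> 0" by (simp_all add: Rd_def Bd_def)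

lemma stepA:
  fixes lam eta :: real
  assumes n4: "4 \<le> n" and lam: "lam > 0" "lam * real n \<ge> 2" "2 * (lam * real n) < real n - 1"
    and T: "Tf n f \<le> eta * real n ^ 4" and eta: "eta \<ge> 0"
  shows "(\<Sum>c<n. Rd n f c * Bd n f c) \<le> (2 * eta + 2 * eta / lam + lam) * real n ^ 3"
proof -
  define m where "m = real n - 2"
  define \<theta> where "\<theta> = (lam * real n - 1) * m / 2"
  define t0 where "t0 = lam * real n"
  have m: "m \<ge> real n / 2" "m > 0" using n4 by (auto simp: m_def)
  have th: "\<theta> > 0" using lam m by (simp add: \<theta>_def)
  have t0: "2 * \<theta> / m + 1 \<le> t0" using m by (simp add: \<theta>_def t0_def)
  let ?ind = "\<lambda>a b. if Bd n f a \<le> t0 \<and> Rd n f b \<le> t0 then m else 0"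
  define K where "K = 2 / m + m / \<theta>"
  have S1: "(\<Sum>c<n. Rd n f c * Bd n f c) \<le> K * (\<Sum>a<n. \<Sum>b\<in>{..<n}-{a}. tau n f a b) + (\<Sum>a<n. \<Sum>b\<in>{..<n}-{a}. ?ind a b)"
  proof -
    have "(\<Sum>c<n. Rd n f c * Bd n f c) = (\<Sum>a<n. \<Sum>b\<in>{..<n}-{a}. Pc n f a b)" by (rule sum_RB)
    also have "\<dots> \<le> (\<Sum>a<n. \<Sum>b\<in>{..<n}-{a}. K * tau n f a b + ?ind a b)"
    proof (rule sum_mono, rule sum_mono)
      fix a b assume a: "a \<in> {..<n}" and b: "b \<in> {..<n} - {a}"
      have "Pc n f a b \<le> 2 * tau n f a b / (real n - 2) + (real n - 2) * tau n f a b / \<theta>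
             + (if Bd n f a \<le> t0 \<and> Rd n f b \<le> t0 then real n - 2 else 0)"
        by (rule pair_bound) (use a b n4 th t0 in \<open>auto simp: m_def\<close>)
      then have pb: "Pc n f a b \<le> 2 * tau n f a b / m + m * tau n f a b / \<theta> + ?ind a b"
        unfolding m_def .
      have "K * tau n f a b = 2 * tau n f a b / m + m * tau n f a b / \<theta>"
        by (simp add: K_def distrib_right)
      then show "Pc n f a b \<le> K * tau n f a b + ?ind a b" using pb by linarith
    qed
    also have "\<dots> = K * (\<Sum>a<n. \<Sum>b\<in>{..<n}-{a}. tau n f a b) + (\<Sum>a<n. \<Sum>b\<in>{..<n}-{a}. ?ind a b)"
      by (simp add: sum.distrib sum_distrib_left)
    finally show ?thesis .
  qed
  have S2: "(\<Sum>a<n. \<Sum>b\<in>{..<n}-{a}. tau n f a b) = Tf n f / 2"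
    using Tf_tau by (simp add: sum_distrib_left[symmetric])
  have S3: "(\<Sum>a<n. \<Sum>b\<in>{..<n}-{a}. ?ind a b) \<le> m * (t0 * real n)"
  proof -
    have "(\<Sum>a<n. \<Sum>b\<in>{..<n}-{a}. ?ind a b) \<le> (\<Sum>a<n. \<Sum>b<n. ?ind a b)"
      using m by (intro sum_mono sum_mono2) auto
    also have "\<dots> = (\<Sum>a<n. \<Sum>b<n. m * ((if Bd n f a \<le> t0 then 1 else 0) * (if Rd n f b \<le> t0 then 1 else 0)))"
      by (intro sum.cong refl) simp
    also have "\<dots> = m * (\<Sum>a<n. \<Sum>b<n. (if Bd n f a \<le> t0 then 1 else 0) * (if Rd n f b \<le> t0 then 1 else (0::real)))"
      by (simp add: sum_distrib_left)
    also have "\<dots> = m * ((\<Sum>a<n. if Bd n f a \<le> t0 then 1 else 0) * (\<Sum>b<n. if Rd n f b \<le> t0 then 1 else (0::real)))"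
      by (simp only: sum_product)
    also have "\<dots> = m * (real (card {a\<in>{..<n}. Bd n f a \<le> t0}) * real (card {b\<in>{..<n}. Rd n f b \<le> t0}))"
      by (simp add: sum_ind_card)
    also have "\<dots> \<le> m * (t0 * real n)"
      using RB_prod[of t0] lam m by (intro mult_left_mono) (auto simp: t0_def)
    finally show ?thesis .
  qed
  have c0: "K \<ge> 0" using m th by (simp add: K_def)
  have B1: "K * (Tf n f / 2) \<le> K * (eta * real n ^ 4 / 2)"
    using T c0 by (intro mult_left_mono) auto
  have mt: "m / \<theta> \<le> 4 / (lam * real n)"
  proof -
    have "m / \<theta> = 2 / (lam * real n - 1)" using m by (simp add: \<theta>_def)
    also have "\<dots> \<le> 4 / (lam * real n)" using lam by (simp add: frac_le divide_simps)
    finally show ?thesis .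
  qed
  have m2: "2 / m \<le> 4 / real n" using m n4 by (simp add: frac_le divide_simps)
  have B2: "K * (eta * real n ^ 4 / 2) \<le> (4 / real n + 4 / (lam * real n)) * (eta * real n ^ 4 / 2)"
    unfolding K_def using mt m2 eta by (intro mult_right_mono add_mono) auto
  have B3: "(4 / real n + 4 / (lam * real n)) * (eta * real n ^ 4 / 2) = (2 * eta + 2 * eta / lam) * real n ^ 3"
    using n4 lam by (simp add: field_simps power_def)
  have B4: "m * (t0 * real n) \<le> lam * real n ^ 3"
  proof -
    have "m \<le> real n" by (simp add: m_def)
    then have "m * (t0 * real n) \<le> real n * (t0 * real n)" using lam by (intro mult_right_mono) (auto simp: t0_def)
    also have "\<dots> = lam * real n ^ 3" by (simp add: t0_def power3_eq_cube)
    finally show ?thesis .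
  qed
  have E: "(2 * eta + 2 * eta / lam + lam) * real n ^ 3 = (2 * eta + 2 * eta / lam) * real n ^ 3 + lam * real n ^ 3"
    by (simp add: distrib_right)
  show ?thesis using S1[unfolded S2] S3 B1 B2 B3 B4 E by linarith
qed

end

context fcol
begin

lemma mix_bound:
  fixes lp kap :: real
  assumes n2: "2 \<le> n" and lp: "lp > 0" and A: "(\<Sum>c<n. Rd n f c * Bd n f c) \<le> kap * real n ^ 3"
  shows "real (card {c\<in>{..<n}. \<not> Bd n f c \<le> lp * real n \<and> \<not> Rd n f c \<le> lp * real n}) \<le> (4 * kap / lp) * real n"
proof -
  define Mix where "Mix = {c\<in>{..<n}. \<not> Bd n f c \<le> lp * real n \<and> \<not> Rd n f c \<le> lp * real n}"
  have each: "Rd n f c * Bd n f c \<ge> lp * real n * ((real n - 1) / 2)" if c: "c \<in> Mix" for c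
  proof -
    have c': "c < n" "Bd n f c > lp * real n" "Rd n f c > lp * real n" using c by (auto simp: Mix_def)
    have s: "Rd n f c + Bd n f c = real n - 1" by (rule RB_sum[OF c'(1)])
    show ?thesis
    proof (cases "Rd n f c \<ge> (real n - 1) / 2")
      case True
      have "lp * real n * ((real n - 1) / 2) \<le> Bd n f c * Rd n f c"
        using c' True lp RdBd_nonneg[of c] by (intro mult_mono) auto
      then show ?thesis by (simp add: mult.commute)
    next
      case False
      have "Bd n f c \<ge> (real n - 1) / 2" using s False by (simp add: field_simps)
      then have "lp * real n * ((real n - 1) / 2) \<le> Rd n f c * Bd n f c"
        using c' lp RdBd_nonneg[of c] by (intro mult_mono) auto
      then show ?thesis .
    qed
  qed
  have "real (card Mix) * (lp * real n * ((real n - 1) / 2)) = (\<Sum>c\<in>Mix. lp * real n * ((real n - 1) / 2))" by simp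
  also have "\<dots> \<le> (\<Sum>c\<in>Mix. Rd n f c * Bd n f c)" by (rule sum_mono) (rule each)
  also have "\<dots> \<le> (\<Sum>c<n. Rd n f c * Bd n f c)"
    by (rule sum_mono2) (auto simp: Mix_def RdBd_nonneg)
  also have "\<dots> \<le> kap * real n ^ 3" by (rule A)
  finally have M1: "real (card Mix) * (lp * real n * ((real n - 1) / 2)) \<le> kap * real n ^ 3" .
  have "lp * real n * ((real n - 1) / 2) \<ge> lp * real n * (real n / 4)"
    using n2 lp by (intro mult_left_mono) auto
  then have "real (card Mix) * (lp * real n * (real n / 4)) \<le> kap * real n ^ 3"
    using M1 by (meson mult_left_mono of_nat_0_le_iff order_trans)
  then have "4 * (real (card Mix) * (lp * real n * (real n / 4))) \<le> 4 * (kap * real n ^ 3)" by simp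
  moreover have "4 * (real (card Mix) * (lp * real n * (real n / 4))) = real (card Mix) * (lp * real n * real n)"
    by simp
  moreover have "4 * (kap * real n ^ 3) = (4 * kap / lp * real n) * (lp * real n * real n)"
    using lp by (simp add: field_simps power3_eq_cube)
  ultimately have "real (card Mix) * (lp * real n * real n) \<le> (4 * kap / lp * real n) * (lp * real n * real n)"
    by simp
  moreover have "lp * real n * real n > 0" using lp n2 by simp
  ultimately have "real (card Mix) \<le> 4 * kap / lp * real n" by (rule mult_right_le_imp_le)
  then show ?thesis unfolding Mix_def .
qed

lemma f_side:
  assumes n: "20480 \<le> n" and S: "\<bar>Ssum n f\<bar> < real n * (real n - 1) / 4"
  shows "Tf n f > real n ^ 4 / 10^9"
proof (rule ccontr)
  assume "\<not> Tf n f > real n ^ 4 / 10^9"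
  then have T: "Tf n f \<le> (1 / 10^9) * real n ^ 4" by simp
  define lam :: real where "lam = 1 / 10240"
  define lp :: real where "lp = 1 / 80"
  define kap :: real where "kap = 2 * (1 / 10^9) + 2 * (1 / 10^9) / lam + lam"
  define mu where "mu = 4 * kap / lp"
  have nr: "real n \<ge> 20480" using n by simp
  have A: "(\<Sum>c<n. Rd n f c * Bd n f c) \<le> kap * real n ^ 3"
    unfolding kap_def
    by (rule stepA) (use n nr T in \<open>auto simp: lam_def\<close>)
  have mix: "real (card {c\<in>{..<n}. \<not> Bd n f c \<le> lp * real n \<and> \<not> Rd n f c \<le> lp * real n}) \<le> mu * real n"
    unfolding mu_def by (rule mix_bound) (use n A in \<open>auto simp: lp_def\<close>)
  have prod: "real (card {c\<in>{..<n}. Bd n f c \<le> lp * real n}) * real (card {c\<in>{..<n}. Rd n f c \<le> lp * real n}) \<le> lp * real n * real n"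
    using RB_prod[of "lp * real n"] nr by (simp add: lp_def)
  have cst: "5 * lp + mu \<le> 1/8" "mu \<le> 1/2" by (simp_all add: mu_def kap_def lam_def lp_def)
  have n1: "n \<ge> 1" using n by simp
  have key: "(5 * lp + mu) * (real n)^2 \<le> real n * (real n - 1) / 4"
  proof -
    have "(5 * lp + mu) * (real n)^2 \<le> (1/8) * (real n)^2" using cst by (intro mult_right_mono) auto
    also have "\<dots> \<le> real n * (real n - 1) / 4" using nr by (simp add: power2_eq_square field_simps)
    finally show ?thesis .
  qed
  have sumRB: "(\<Sum>c<n. Rd n f c) + (\<Sum>c<n. Bd n f c) = real n * (real n - 1)"
    using RB_sum by (simp add: sum.distrib[symmetric])
  show False
  proof (cases "card {c\<in>{..<n}. Bd n f c \<le> lp * real n} \<ge> card {c\<in>{..<n}. Rd n f c \<le> lp * real n}")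
    case True
    have "(\<Sum>c<n. Bd n f c) \<le> (5 * lp + mu) * (real n)^2"
      by (rule sideD[where R="Rd n f"]) (use RB_sum RdBd_nonneg True prod mix cst n1 in \<open>auto simp: lp_def\<close>)
    then have "2 * Ssum n f \<ge> real n * (real n - 1) / 2"
      using S_RB sumRB key by (simp add: sum_subtractf)
    then show False using S by linarith
  next
    case False
    have prod': "real (card {c\<in>{..<n}. Rd n f c \<le> lp * real n}) * real (card {c\<in>{..<n}. Bd n f c \<le> lp * real n}) \<le> lp * real n * real n"
      using prod by (simp add: mult.commute)
    have mix': "real (card {c\<in>{..<n}. \<not> Rd n f c \<le> lp * real n \<and> \<not> Bd n f c \<le> lp * real n}) \<le> mu * real n"
      using mix by (simp add: conj_commute)
    have "(\<Sum>c<n. Rd n f c) \<le> (5 * lp + mu) * (real n)^2"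
      by (rule sideD[where R="Bd n f"]) (use RB_sum RdBd_nonneg False prod' mix' cst n1 in \<open>auto simp: lp_def add.commute\<close>)
    then have "2 * Ssum n f \<le> - (real n * (real n - 1) / 2)"
      using S_RB sumRB key by (simp add: sum_subtractf)
    then show False using S by linarith
  qed
qed

end

lemma fact_reduce4: "4 \<le> n \<Longrightarrow> (fact n :: real) = real n * real (n-1) * real (n-2) * real (n-3) * fact (n - 4)"
proof -
  assume "4 \<le> n"
  then obtain m where "n = m + 4" by (metis le_add_diff_inverse2)
  then have "n = Suc (Suc (Suc (Suc m)))" by simp
  then show ?thesis by (simp add: algebra_simps)
qed

lemma div4_ge: "8 \<le> n \<Longrightarrow> real (n div 4) \<ge> real n / 8"
proof -
  assume n: "8 \<le> n"
  have "n \<le> 4 * (n div 4) + 3" by linarith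
  then have "real n \<le> 4 * real (n div 4) + 3" by linarith
  then show ?thesis using n by linarith
qed

lemma main_bound:
  fixes f :: "nat set \<Rightarrow> int"
  assumes G: "graph_on n F" and R: "regular n F d"
    and fpm: "\<forall>e\<in>Kn_edges n. f e = 1 \<or> f e = -1"
    and n: "20480 \<le> n" and d1: "1 \<le> d" and dn: "d + 2 \<le> n"
    and S: "\<bar>Ssum n f\<bar> < real n * (real n - 1) / 4"
  shows "\<exists>H. is_copy n F H \<and>
      \<bar>\<Sum>e\<in>H. real_of_int (f e)\<bar> \<ge> sqrt (min (real d) (real n - 1 - real d)) * real n / (8192 * 10^9)"
proof -
  define mu where "mu = min (real d) (real n - 1 - real d)"
  define t where "t = sqrt (32 * mu)"
  define k where "k = n div 4"
  have nr: "real n \<ge> 20480" using n by simp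
  have mu1: "mu \<ge> 1" using d1 dn unfolding mu_def by auto
  have t0: "t > 0" using mu1 by (simp add: t_def)
  have tsq: "t^2 = 32 * mu" using mu1 by (simp add: t_def)
  have tt: "32 * real d \<le> t^2 \<or> 32 * (real n - 1 - real d) \<le> t^2"
    unfolding tsq mu_def by linarith
  have kn: "2 * k + 2 * k \<le> n" by (simp add: k_def)
  obtain H where H: "is_copy n F H"
    "2 * \<bar>\<Sum>e\<in>H. real_of_int (f e)\<bar> * (fact n)^2 \<ge> (3 / (4 * t)) * real k * real k * (fact (n - 4))^2 * Tf n f * TF n F"
    using main_exists[OF G R fpm kn _ t0 tt] n by auto
  define X where "X = \<bar>\<Sum>e\<in>H. real_of_int (f e)\<bar>"
  have X0: "X \<ge> 0" by (simp add: X_def)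
  interpret fcol n f by unfold_locales (rule fpm)
  have Tf: "Tf n f \<ge> real n ^ 4 / 10^9" using f_side[OF n S] by simp
  have TF: "TF n F \<ge> real n * (real n - 2) * real d * (real n - 1 - real d)"
    using TF_lower[OF G R] n by simp
  have kr: "real k \<ge> real n / 8" unfolding k_def by (rule div4_ge) (use n in simp)
  define P4 where "P4 = real n * real (n-1) * real (n-2) * real (n-3)"
  define f4 :: real where "f4 = fact (n - 4)"
  have f4: "f4 > 0" by (simp add: f4_def)
  have fn: "(fact n :: real) = P4 * f4" unfolding P4_def f4_def by (rule fact_reduce4) (use n in simp)
  have P4pos: "P4 > 0" using n by (simp add: P4_def)
  have P4le: "P4 \<le> real n ^ 4"
  proof -
    have "real (n-1) \<le> real n" "real (n-2) \<le> real n" "real (n-3) \<le> real n" by auto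
    then have "P4 \<le> real n * real n * real n * real n" unfolding P4_def
      by (intro mult_mono) auto
    then show ?thesis by (simp add: power4_eq_xxxx)
  qed
  have dd: "mu * (real n / 4) \<le> real d * (real n - 1 - real d)"
  proof (cases "real d \<le> real n - 1 - real d")
    case True
    then have "mu = real d" unfolding mu_def by simp
    moreover have "real n / 4 \<le> real n - 1 - real d" using True nr by linarith
    then have "real d * (real n / 4) \<le> real d * (real n - 1 - real d)" by (rule mult_left_mono) simp
    ultimately show ?thesis by simp
  next
    case False
    then have m: "mu = real n - 1 - real d" unfolding mu_def by simp
    have "real n / 4 \<le> real d" using False nr by linarith
    moreover have "real n - 1 - real d \<ge> 0" using dn by simp
    ultimately have "(real n / 4) * (real n - 1 - real d) \<le> real d * (real n - 1 - real d)"
      by (rule mult_right_mono)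
    then show ?thesis using m by (simp add: mult.commute)
  qed
  define ct where "ct = 3 / (4 * t)"
  have ct0: "ct \<ge> 0" using t0 by (simp add: ct_def)
  have A: "2 * X * P4^2 \<ge> ct * real k * real k * Tf n f * TF n F"
  proof -
    have e1: "2 * X * (fact n)^2 = (2 * X * P4^2) * f4^2" unfolding fn by (simp add: power_mult_distrib)
    have e2: "ct * real k * real k * (fact (n - 4))^2 * Tf n f * TF n F = (ct * real k * real k * Tf n f * TF n F) * f4^2"
      by (simp add: f4_def)
    have "(ct * real k * real k * Tf n f * TF n F) * f4^2 \<le> (2 * X * P4^2) * f4^2"
      using H(2) unfolding X_def[symmetric] ct_def[symmetric] e1 e2 .
    moreover have "f4^2 > 0" using f4 by simp
    ultimately show ?thesis by (rule mult_right_le_imp_le)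
  qed
  define Q where "Q = real n * (real n - 2) * (mu * (real n / 4))"
  have Q0: "Q \<ge> 0" using nr mu1 by (simp add: Q_def)
  have QTF: "Q \<le> TF n F"
  proof -
    have "Q \<le> real n * (real n - 2) * (real d * (real n - 1 - real d))"
      unfolding Q_def using dd nr by (intro mult_left_mono) auto
    then show ?thesis using TF by (simp add: mult.assoc)
  qed
  have Tf0: "real n ^ 4 / 10^9 \<ge> 0" by simp
  have B1: "real k * real k \<ge> (real n / 8) * (real n / 8)" using kr nr by (intro mult_mono) auto
  have Tfpos: "Tf n f \<ge> 0" using Tf Tf0 by linarith
  have B2: "Tf n f * TF n F \<ge> (real n ^ 4 / 10^9) * Q" by (rule mult_mono[OF Tf QTF Tfpos Q0])
  have B3: "ct * (real k * real k) * (Tf n f * TF n F) \<ge> ct * ((real n / 8) * (real n / 8)) * ((real n ^ 4 / 10^9) * Q)"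
  proof -
    have X: "ct * ((real n / 8) * (real n / 8)) \<le> ct * (real k * real k)" using B1 ct0 by (rule mult_left_mono)
    have p1: "0 \<le> ct * (real k * real k)" using ct0 by simp
    have p2: "0 \<le> (real n ^ 4 / 10^9) * Q" using Q0 by simp
    from mult_mono[OF X B2 p1 p2] show ?thesis .
  qed
  have B: "ct * real k * real k * Tf n f * TF n F \<ge> ct * ((real n / 8) * (real n / 8)) * ((real n ^ 4 / 10^9) * Q)"
    using B3 by (simp add: mult.assoc)
  have C: "2 * X * P4^2 \<le> 2 * X * real n ^ 8"
  proof -
    have "P4^2 \<le> (real n ^ 4)^2" using P4le P4pos by (intro power_mono) auto
    then show ?thesis using X0 by (simp add: power_mult[symmetric] mult_left_mono)
  qed
  have E: "ct * ((real n / 8) * (real n / 8)) * ((real n ^ 4 / 10^9) * Q) = real n ^ 8 * (3 * (real n - 2) * mu / (1024 * 10^9 * t))"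
    unfolding ct_def Q_def using t0 by (simp add: field_simps eval_nat_numeral)
  have D: "real n ^ 8 * (3 * (real n - 2) * mu / (1024 * 10^9 * t)) \<le> real n ^ 8 * (2 * X)"
    using A B C E by (simp add: mult.commute mult.left_commute)
  have F1: "2 * X \<ge> 3 * (real n - 2) * mu / (1024 * 10^9 * t)"
    by (rule mult_left_le_imp_le[OF D]) (use nr in simp)
  have F2: "3 * (real n - 2) * mu / (1024 * 10^9 * t) \<ge> 2 * (sqrt mu * real n / (8192 * 10^9))"
  proof -
    have sm: "sqrt mu > 0" using mu1 by simp
    have tle: "t \<le> 6 * sqrt mu"
    proof -
      have "t = sqrt 32 * sqrt mu" by (simp add: t_def real_sqrt_mult)
      moreover have "sqrt 32 \<le> (6::real)" by (rule real_le_lsqrt) auto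
      ultimately show ?thesis using sm by (simp add: mult_right_mono)
    qed
    have num0: "3 * (real n - 2) * mu / (1024 * 10^9) \<ge> 0" using nr mu1 by simp
    have "3 * (real n - 2) * mu / (1024 * 10^9 * (6 * sqrt mu)) \<le> 3 * (real n - 2) * mu / (1024 * 10^9 * t)"
      using tle t0 nr mu1 by (intro divide_left_mono) auto
    moreover have "3 * (real n - 2) * mu / (1024 * 10^9 * (6 * sqrt mu)) = (real n - 2) * sqrt mu / (2048 * 10^9)"
    proof -
      have ss: "sqrt mu * sqrt mu = mu" using mu1 by simp
      have ss2: "sqrt mu * (sqrt mu * x) = mu * x" for x using ss by (simp add: mult.assoc[symmetric])
      show ?thesis using sm by (simp add: field_simps ss ss2)
    qed
    moreover have "(real n - 2) * sqrt mu / (2048 * 10^9) \<ge> 2 * (sqrt mu * real n / (8192 * 10^9))"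
      using nr sm by (simp add: field_simps mult_right_mono)
    ultimately show ?thesis by linarith
  qed
  have "X \<ge> sqrt mu * real n / (8192 * 10^9)" using F1 F2 by linarith
  then show ?thesis using H(1) unfolding X_def mu_def by (intro exI[of _ H]) auto
qed

lemma disc_real: "real_of_int (discrepancy f H) = \<bar>\<Sum>e\<in>H. real_of_int (f e)\<bar>"
  by (simp add: discrepancy_def)

theorem theorem1p2:
  shows "\<exists>c::real. c > 0 \<and>
    (\<forall>\<epsilon>::real. \<epsilon> > 0 \<longrightarrow>
      (\<exists>n0::nat. \<forall>n\<ge>n0. \<forall>F d.
        graph_on n F \<longrightarrow> regular n F d \<longrightarrow> real d \<le> (1 - \<epsilon>) * real n \<longrightarrow>
        (\<forall>f :: nat set \<Rightarrow> int. (\<forall>e\<in>Kn_edges n. f e = 1 \<or> f e = -1) \<longrightarrow>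
          (\<exists>H. is_copy n F H \<and>
             real_of_int (discrepancy f H) \<ge> c * sqrt (\<epsilon> * real d) * real n))))"
proof (intro exI[of _ "1 / (16384 * 10^9)"] conjI allI impI)
  let ?c = "1 / (16384 * 10^9) :: real"
  show "?c > 0" by simp
  fix \<epsilon> :: real assume e0: "\<epsilon> > 0"
  show "\<exists>n0::nat. \<forall>n\<ge>n0. \<forall>F d.
        graph_on n F \<longrightarrow> regular n F d \<longrightarrow> real d \<le> (1 - \<epsilon>) * real n \<longrightarrow>
        (\<forall>f :: nat set \<Rightarrow> int. (\<forall>e\<in>Kn_edges n. f e = 1 \<or> f e = -1) \<longrightarrow>
          (\<exists>H. is_copy n F H \<and> real_of_int (discrepancy f H) \<ge> ?c * sqrt (\<epsilon> * real d) * real n))"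
  proof (intro exI[of _ "20480 + nat \<lceil>2 / \<epsilon>\<rceil>"] allI impI)
    fix n :: nat and F :: "nat set set" and d :: nat and f :: "nat set \<Rightarrow> int"
    assume n: "20480 + nat \<lceil>2 / \<epsilon>\<rceil> \<le> n" and G: "graph_on n F" and R: "regular n F d"
      and dle: "real d \<le> (1 - \<epsilon>) * real n" and fpm: "\<forall>e\<in>Kn_edges n. f e = 1 \<or> f e = -1"
    have n1: "20480 \<le> n" using n by simp
    have nr: "real n \<ge> 20480" using n1 by simp
    have en: "\<epsilon> * real n \<ge> 2"
    proof -
      have "real (nat \<lceil>2 / \<epsilon>\<rceil>) \<le> real n" using n by linarith
      moreover have "2 / \<epsilon> \<le> real (nat \<lceil>2 / \<epsilon>\<rceil>)" by linarith
      ultimately have "2 / \<epsilon> \<le> real n" by linarith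
      then show ?thesis using e0 by (simp add: divide_le_eq mult.commute)
    qed
    show "\<exists>H. is_copy n F H \<and> real_of_int (discrepancy f H) \<ge> ?c * sqrt (\<epsilon> * real d) * real n"
    proof (cases "d = 0")
      case True
      have "is_copy n F ((\<lambda>e. id ` e) ` F)" by (rule copy_sum(1)[OF permutes_id])
      moreover have "real_of_int (discrepancy f ((\<lambda>e. id ` e) ` F)) \<ge> ?c * sqrt (\<epsilon> * real d) * real n"
        using True by (simp add: disc_real)
      ultimately show ?thesis by blast
    next
      case False
      then have d1: "1 \<le> d" by simp
      have dn: "d + 2 \<le> n"
      proof -
        have "real d \<le> real n - 2" using dle en by (simp add: algebra_simps)
        then show ?thesis by linarith
      qed
      have e1: "\<epsilon> \<le> 1"
      proof (rule ccontr)
        assume "\<not> \<epsilon> \<le> 1"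
        then have "(1 - \<epsilon>) * real n < 0" using nr by (simp add: mult_neg_pos)
        then show False using dle by simp
      qed
      have sq1: "sqrt (\<epsilon> * real d) \<le> real d"
      proof -
        have "\<epsilon> * real d \<le> real d" by (rule mult_left_le_one_le) (use e0 e1 in auto)
        also have "\<dots> \<le> (real d)^2" using d1 by (simp add: power2_eq_square)
        finally show ?thesis by (metis real_sqrt_le_mono real_sqrt_abs abs_of_nat)
      qed
      show ?thesis
      proof (cases "\<bar>Ssum n f\<bar> < real n * (real n - 1) / 4")
        case True
        obtain H where H: "is_copy n F H"
          "\<bar>\<Sum>e\<in>H. real_of_int (f e)\<bar> \<ge> sqrt (min (real d) (real n - 1 - real d)) * real n / (8192 * 10^9)"
          using main_bound[OF G R fpm n1 d1 dn True] by blast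
        have mu: "min (real d) (real n - 1 - real d) \<ge> \<epsilon> * real d / 2"
        proof -
          have "\<epsilon> * real d \<le> real d" by (rule mult_left_le_one_le) (use e0 e1 in auto)
          then have "\<epsilon> * real d / 2 \<le> real d" using e0 by simp
          moreover have "\<epsilon> * real d \<le> \<epsilon> * real n" using dn e0 by simp
          then have "\<epsilon> * real d / 2 \<le> real n - 1 - real d" using dle en by (simp add: algebra_simps)
          ultimately show ?thesis by simp
        qed
        have "sqrt (\<epsilon> * real d) / 2 \<le> sqrt (\<epsilon> * real d / 2)"
        proof -
          have "sqrt (\<epsilon> * real d / 2) = sqrt (\<epsilon> * real d) / sqrt 2" by (simp add: real_sqrt_divide)
          moreover have "sqrt 2 \<le> (2::real)" by (rule real_le_lsqrt) auto
          then have "sqrt (\<epsilon> * real d) / 2 \<le> sqrt (\<epsilon> * real d) / sqrt 2"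
            by (rule divide_left_mono) (use e0 in auto)
          ultimately show ?thesis by simp
        qed
        also have "\<dots> \<le> sqrt (min (real d) (real n - 1 - real d))" using mu by simp
        finally have s2: "sqrt (\<epsilon> * real d) / 2 \<le> sqrt (min (real d) (real n - 1 - real d))" .
        have "?c * sqrt (\<epsilon> * real d) * real n = (sqrt (\<epsilon> * real d) / 2) * real n / (8192 * 10^9)" by simp
        also have "\<dots> \<le> sqrt (min (real d) (real n - 1 - real d)) * real n / (8192 * 10^9)"
          using s2 nr by (simp add: divide_right_mono mult_right_mono)
        also have "\<dots> \<le> real_of_int (discrepancy f H)" using H(2) by (simp add: disc_real)
        finally show ?thesis using H(1) by blast
      next
        case False
        obtain \<sigma> where s: "\<sigma> permutes {..<n}"
          "\<bar>\<Sum>e\<in>F. real_of_int (f (\<sigma> ` e))\<bar> * real (n - 1) \<ge> real d * \<bar>Ssum n f\<bar>"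
          using avg_case[OF G R] n1 by auto
        define H where "H = (\<lambda>e. \<sigma> ` e) ` F"
        have Hc: "is_copy n F H" unfolding H_def by (rule copy_sum(1)[OF s(1)])
        have Hs: "real_of_int (discrepancy f H) = \<bar>\<Sum>e\<in>F. real_of_int (f (\<sigma> ` e))\<bar>"
          unfolding disc_real H_def by (rule arg_cong[where f=abs], rule copy_sum(2)[OF s(1)])
        have n1r: "real (n - 1) = real n - 1" using n1 by simp
        have "real d * (real n * (real n - 1) / 4) \<le> real d * \<bar>Ssum n f\<bar>"
          using False by (intro mult_left_mono) auto
        moreover have "real d * (real n * (real n - 1) / 4) = (real d * real n / 4) * (real n - 1)"
          by (simp add: algebra_simps)
        moreover have "real d * \<bar>Ssum n f\<bar> \<le> real_of_int (discrepancy f H) * (real n - 1)"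
          using s(2) Hs n1r by simp
        ultimately have "(real d * real n / 4) * (real n - 1) \<le> real_of_int (discrepancy f H) * (real n - 1)"
          by linarith
        then have D: "real d * real n / 4 \<le> real_of_int (discrepancy f H)"
          by (rule mult_right_le_imp_le) (use nr in simp)
        have "?c * sqrt (\<epsilon> * real d) * real n \<le> ?c * real d * real n"
          using sq1 nr by (simp add: mult_right_mono)
        also have "\<dots> \<le> real d * real n / 4" by simp
        finally show ?thesis using D Hc by (meson order_trans)
      qed
    qed
  qed
qed

end
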